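(* Let $k\ge0$, $f,g\in\mathbf P_k(\Gamma,\mathbb R^+;\mathbb C^3)$, and $\varphi\in C^\infty(\Gamma;\mathbb R^3)$ tangential ($\varphi\cdot n=0$). Then the problem: find $(u,v)\in C^\infty(\Gamma;C^\infty(\mathbb R^+))^2$ ($\mathbb C^3$-valued) with $$\partial_\eta v\times n+\tfrac1\omega u=e^{-\sqrt i\,\eta}f,\qquad -\partial_\eta u\times n+i\omega v=e^{-\sqrt i\,\eta}g\qquad\text{in }\Gamma\times\mathbb R^+,$$ $u(x_\Gamma,0)\times n=\varphi(x_\Gamma)$ for all $x_\Gamma\in\Gamma$, and $\int_0^\infty|u(x_\Gamma,\eta)|^2d\eta<\infty$, $\int_0^\infty|v(x_\Gamma,\eta)|^2d\eta<\infty$ for all $x_\Gamma\in\Gamma$, has a unique solution, and it is of the form $u=e^{-\sqrt i\,\eta}p$, $v=e^{-\sqrt i\,\eta}q$ with $p,q\in\mathbf P_{k+1}(\Gamma,\mathbb R^+;\mathbb C^3)$.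
   Context: $\Gamma$ is a smooth closed surface in $\mathbb R^3$ with unit normal field $n$; $\omega>0$; $\sqrt i:=\frac{\sqrt2}{2}(1+i)$. Functions are of $(x_\Gamma,\eta)\in\Gamma\times\mathbb R^+$. $\mathbf P_k(\Gamma,\mathbb R^+;\mathbb C^3)$ denotes the set of functions $u(x_\Gamma,\eta)=\sum_{j=0}^k a_j(x_\Gamma)\eta^j$ with $a_j\in C^\infty(\Gamma;\mathbb C^3)$. *)

theory Defs
  imports "HOL-Analysis.Analysis"
begin

fun dd :: "'a::real_normed_vector list \<Rightarrow> ('a \<Rightarrow> 'b::real_normed_vector) \<Rightarrow> 'a \<Rightarrow> 'b" where
  "dd [] f = f"
| "dd (v # vs) f = (\<lambda>x. frechet_derivative (dd vs f) (at x) v)"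

(* C^infinity on an open set S: all iterated directional derivatives exist and are
   (Frechet) differentiable on S; in finite dimension this is exactly C^infinity. *)
definition smooth_on :: "'a::real_normed_vector set \<Rightarrow> ('a \<Rightarrow> 'b::real_normed_vector) \<Rightarrow> bool" where
  "smooth_on S f \<longleftrightarrow> (\<forall>vs. \<forall>x\<in>S. dd vs f differentiable (at x))"

definition smooth_closed_surface :: "(real^3) set \<Rightarrow> bool" where
  "smooth_closed_surface \<Gamma> \<longleftrightarrow> compact \<Gamma> \<and> \<Gamma> \<noteq> {} \<and>
     (\<exists>F :: real^3 \<Rightarrow> real. smooth_on UNIV F \<and> \<Gamma> = {x. F x = 0} \<and>
        (\<forall>x\<in>\<Gamma>. frechet_derivative F (at x) \<noteq> (\<lambda>_. 0)))"

definition tangent_space :: "(real^3) set \<Rightarrow> real^3 \<Rightarrow> (real^3) set" where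
  "tangent_space \<Gamma> x = {t. \<exists>\<gamma> :: real \<Rightarrow> real^3. \<gamma> C1_differentiable_on UNIV \<and>
        range \<gamma> \<subseteq> \<Gamma> \<and> \<gamma> 0 = x \<and> vector_derivative \<gamma> (at 0) = t}"

(* C^infinity(\<Gamma>; V): restrictions to \<Gamma> of smooth functions on R^3 *)
definition smooth_on_surf :: "(real^3) set \<Rightarrow> (real^3 \<Rightarrow> 'b::real_normed_vector) \<Rightarrow> bool" where
  "smooth_on_surf \<Gamma> a \<longleftrightarrow> (\<exists>A. smooth_on UNIV A \<and> (\<forall>x\<in>\<Gamma>. a x = A x))"

definition unit_normal_field :: "(real^3) set \<Rightarrow> (real^3 \<Rightarrow> real^3) \<Rightarrow> bool" where
  "unit_normal_field \<Gamma> n \<longleftrightarrow> smooth_on_surf \<Gamma> n \<and>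
     (\<forall>x\<in>\<Gamma>. norm (n x) = 1 \<and> (\<forall>t\<in>tangent_space \<Gamma> x. n x \<bullet> t = 0))"

(* C^infinity(\<Gamma>; C^infinity(R^+)): functions on \<Gamma> \<times> [0,\<infinity>) that are restrictions of
   jointly smooth functions on R^3 \<times> R *)
definition smooth_surf_halfline :: "(real^3) set \<Rightarrow> (real^3 \<Rightarrow> real \<Rightarrow> 'b::real_normed_vector) \<Rightarrow> bool" where
  "smooth_surf_halfline \<Gamma> u \<longleftrightarrow>
     (\<exists>U :: (real^3) \<times> real \<Rightarrow> 'b. smooth_on UNIV U \<and> (\<forall>x\<in>\<Gamma>. \<forall>\<eta>\<ge>0. u x \<eta> = U (x, \<eta>)))"

definition poly_class :: "nat \<Rightarrow> (real^3) set \<Rightarrow> (real^3 \<Rightarrow> real \<Rightarrow> complex^3) \<Rightarrow> bool" where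
  "poly_class k \<Gamma> u \<longleftrightarrow> (\<exists>a :: nat \<Rightarrow> real^3 \<Rightarrow> complex^3.
      (\<forall>j\<le>k. smooth_on_surf \<Gamma> (a j)) \<and>
      (\<forall>x\<in>\<Gamma>. \<forall>\<eta>\<ge>0. u x \<eta> = (\<Sum>j\<le>k. (\<eta> ^ j) *\<^sub>R a j x)))"

definition ccross :: "complex^3 \<Rightarrow> complex^3 \<Rightarrow> complex^3" where
  "ccross x y = vector [x$2 * y$3 - x$3 * y$2, x$3 * y$1 - x$1 * y$3, x$1 * y$2 - x$2 * y$1]"

definition cvec :: "real^3 \<Rightarrow> complex^3" where
  "cvec v = (\<chi> i. complex_of_real (v $ i))"

definition sqrt_i :: complex where
  "sqrt_i = complex_of_real (sqrt 2 / 2) * (1 + \<i>)"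

definition edecay :: "real \<Rightarrow> complex" where
  "edecay \<eta> = exp (- sqrt_i * complex_of_real \<eta>)"

definition is_solution ::
  "(real^3) set \<Rightarrow> (real^3 \<Rightarrow> real^3) \<Rightarrow> real \<Rightarrow> (real^3 \<Rightarrow> real \<Rightarrow> complex^3) \<Rightarrow>
   (real^3 \<Rightarrow> real \<Rightarrow> complex^3) \<Rightarrow> (real^3 \<Rightarrow> real^3) \<Rightarrow>
   (real^3 \<Rightarrow> real \<Rightarrow> complex^3) \<Rightarrow> (real^3 \<Rightarrow> real \<Rightarrow> complex^3) \<Rightarrow> bool" where
  "is_solution \<Gamma> n \<omega> f g \<phi> u v \<longleftrightarrow>
     smooth_surf_halfline \<Gamma> u \<and> smooth_surf_halfline \<Gamma> v \<and>
     (\<forall>x\<in>\<Gamma>. \<forall>\<eta>>0.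
        ccross (vector_derivative (v x) (at \<eta>)) (cvec (n x)) + complex_of_real (1 / \<omega>) *s u x \<eta>
          = edecay \<eta> *s f x \<eta> \<and>
        - ccross (vector_derivative (u x) (at \<eta>)) (cvec (n x)) + (\<i> * complex_of_real \<omega>) *s v x \<eta>
          = edecay \<eta> *s g x \<eta>) \<and>
     (\<forall>x\<in>\<Gamma>. ccross (u x 0) (cvec (n x)) = cvec (\<phi> x)) \<and>
     (\<forall>x\<in>\<Gamma>. (\<integral>\<^sup>+ \<eta>\<in>{0..}. ennreal ((norm (u x \<eta>))\<^sup>2) \<partial>lborel) < \<infinity> \<and>
              (\<integral>\<^sup>+ \<eta>\<in>{0..}. ennreal ((norm (v x \<eta>))\<^sup>2) \<partial>lborel) < \<infinity>)"

end

theory Submission imports Defs begin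


abbreviation sm :: "('a::real_normed_vector \<Rightarrow> 'b::real_normed_vector) \<Rightarrow> bool" where
  "sm f \<equiv> smooth_on UNIV f"

abbreviation Dv :: "('a::real_normed_vector \<Rightarrow> 'b::real_normed_vector) \<Rightarrow> 'a \<Rightarrow> 'a \<Rightarrow> 'b" where
  "Dv f v \<equiv> (\<lambda>x. frechet_derivative f (at x) v)"

lemma dd_append: "dd (vs @ ws) f = dd vs (dd ws f)"
  by (induction vs) auto

lemma sm_diff: "sm f \<Longrightarrow> f differentiable (at x)"
  unfolding smooth_on_def by (metis UNIV_I dd.simps(1))

lemma sm_D: "sm f \<Longrightarrow> sm (Dv f v)"
  unfolding smooth_on_def
proof (intro allI ballI)
  fix vs x assume "\<forall>vs. \<forall>x\<in>UNIV. dd vs f differentiable at x"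
  then have "dd (vs @ [v]) f differentiable at x" by blast
  then show "dd vs (Dv f v) differentiable at x" by (simp add: dd_append)
qed

lemma sm_class:
  assumes d: "\<And>f x. f \<in> C \<Longrightarrow> f differentiable (at x)"
    and c: "\<And>f v. f \<in> C \<Longrightarrow> Dv f v \<in> C"
    and f: "f \<in> C"
  shows "sm f"
proof -
  have "\<And>vs. dd vs f \<in> C"
  proof -
    fix vs show "dd vs f \<in> C" by (induction vs) (auto simp: f c)
  qed
  then show ?thesis unfolding smooth_on_def using d by blast
qed

lemma frechet_at: "(f has_derivative f') (at x) \<Longrightarrow> frechet_derivative f (at x) = f'"
  using frechet_derivative_at by metis

lemma sm_affine:
  assumes "bounded_linear L"
  shows "sm (\<lambda>x. L x + c)"
proof (rule sm_class[where C="{g. \<exists>L c. bounded_linear L \<and> g = (\<lambda>x. L x + c)}"])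
  fix f x assume "f \<in> {g. \<exists>L c. bounded_linear L \<and> g = (\<lambda>x. L x + c)}"
  then obtain L c where L: "bounded_linear L" "f = (\<lambda>x. L x + c)" by blast
  show "f differentiable at x" unfolding L(2) using L(1)
    by (intro differentiable_add bounded_linear_imp_differentiable differentiable_const)
next
  fix f v assume "f \<in> {g. \<exists>L c. bounded_linear L \<and> g = (\<lambda>x. L x + c)}"
  then obtain L c where L: "bounded_linear L" "f = (\<lambda>x. L x + c)" by blast
  have "\<And>x. frechet_derivative f (at x) = L"
    unfolding L(2) apply (rule frechet_at)
    using has_derivative_add_const[OF bounded_linear_imp_has_derivative[OF L(1)]] by simp
  then have "Dv f v = (\<lambda>x. (\<lambda>_. 0) x + L v)" by simp
  then show "Dv f v \<in> {g. \<exists>L c. bounded_linear L \<and> g = (\<lambda>x. L x + c)}"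
    using bounded_linear_zero by blast
qed (use assms in blast)

lemma sm_const: "sm (\<lambda>x. c)"
  using sm_affine[of "\<lambda>_. 0" c] bounded_linear_zero by simp

lemma sm_linear: "bounded_linear L \<Longrightarrow> sm L"
  using sm_affine[of L 0] by simp

lemma sm_add:
  assumes "sm f" "sm g" shows "sm (\<lambda>x. f x + g x)"
proof (rule sm_class[where C="{h. \<exists>f g. sm f \<and> sm g \<and> h = (\<lambda>x. f x + g x)}"])
  fix h x assume "h \<in> {h. \<exists>f g. sm f \<and> sm g \<and> h = (\<lambda>x. f x + g x)}"
  then obtain f g where fg: "sm f" "sm g" "h = (\<lambda>x. f x + g x)" by blast
  show "h differentiable at x" unfolding fg(3)
    by (intro differentiable_add sm_diff fg)
next
  fix h v assume "h \<in> {h. \<exists>f g. sm f \<and> sm g \<and> h = (\<lambda>x. f x + g x)}"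
  then obtain f g where fg: "sm f" "sm g" "h = (\<lambda>x. f x + g x)" by blast
  have "\<And>x. frechet_derivative h (at x) = (\<lambda>v. frechet_derivative f (at x) v + frechet_derivative g (at x) v)"
    unfolding fg(3) apply (rule frechet_at)
    by (intro has_derivative_add frechet_derivative_works[THEN iffD1] sm_diff fg)
  then have "Dv h v = (\<lambda>x. Dv f v x + Dv g v x)" by simp
  then show "Dv h v \<in> {h. \<exists>f g. sm f \<and> sm g \<and> h = (\<lambda>x. f x + g x)}"
    using sm_D fg by blast
qed (use assms in blast)

lemma sm_lin_comp:
  assumes "bounded_linear L" "sm f" shows "sm (\<lambda>x. L (f x))"
proof (rule sm_class[where C="{h. \<exists>f. sm f \<and> h = (\<lambda>x. L (f x))}"])
  fix h x assume "h \<in> {h. \<exists>f. sm f \<and> h = (\<lambda>x. L (f x))}"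
  then obtain f where f: "sm f" "h = (\<lambda>x. L (f x))" by blast
  show "h differentiable at x" unfolding f(2)
    using differentiable_chain_at[OF sm_diff[OF f(1)] bounded_linear_imp_differentiable[OF assms(1)]]
    by (simp add: o_def)
next
  fix h v assume "h \<in> {h. \<exists>f. sm f \<and> h = (\<lambda>x. L (f x))}"
  then obtain f where f: "sm f" "h = (\<lambda>x. L (f x))" by blast
  have "\<And>x. frechet_derivative h (at x) = (\<lambda>v. L (frechet_derivative f (at x) v))"
    unfolding f(2) apply (rule frechet_at)
    by (intro bounded_linear.has_derivative[OF assms(1)] frechet_derivative_works[THEN iffD1] sm_diff f)
  then have "Dv h v = (\<lambda>x. L (Dv f v x))" by simp
  then show "Dv h v \<in> {h. \<exists>f. sm f \<and> h = (\<lambda>x. L (f x))}"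
    using sm_D f by blast
qed (use assms in blast)

lemma sm_comp_lin:
  assumes "bounded_linear L" "sm f" shows "sm (\<lambda>x. f (L x))"
proof (rule sm_class[where C="{h. \<exists>f. sm f \<and> h = (\<lambda>x. f (L x))}"])
  fix h x assume "h \<in> {h. \<exists>f. sm f \<and> h = (\<lambda>x. f (L x))}"
  then obtain f where f: "sm f" "h = (\<lambda>x. f (L x))" by blast
  show "h differentiable at x" unfolding f(2)
    using differentiable_chain_at[OF bounded_linear_imp_differentiable[OF assms(1)] sm_diff[OF f(1)]]
    by (simp add: o_def)
next
  fix h v assume "h \<in> {h. \<exists>f. sm f \<and> h = (\<lambda>x. f (L x))}"
  then obtain f where f: "sm f" "h = (\<lambda>x. f (L x))" by blast
  have "\<And>x. frechet_derivative h (at x) = (\<lambda>v. frechet_derivative f (at (L x)) (L v))"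
    unfolding f(2) apply (rule frechet_at)
    using diff_chain_at[OF bounded_linear_imp_has_derivative[OF assms(1)]
        frechet_derivative_works[THEN iffD1, OF sm_diff[OF f(1)]]]
    by (simp add: o_def)
  then have "Dv h v = (\<lambda>x. Dv f (L v) (L x))" by simp
  then show "Dv h v \<in> {h. \<exists>f. sm f \<and> h = (\<lambda>x. f (L x))}"
    using sm_D f by blast
qed (use assms in blast)

inductive_set bcl :: "('b::real_normed_vector \<Rightarrow> 'c::real_normed_vector \<Rightarrow> 'd::real_normed_vector) \<Rightarrow>
   ('a::real_normed_vector \<Rightarrow> 'd) set" for b where
  base: "sm f \<Longrightarrow> sm g \<Longrightarrow> (\<lambda>x. b (f x) (g x)) \<in> bcl b"
| add: "F \<in> bcl b \<Longrightarrow> G \<in> bcl b \<Longrightarrow> (\<lambda>x. F x + G x) \<in> bcl b"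

lemma bcl_props:
  assumes bb: "bounded_bilinear b" and F: "F \<in> bcl b"
  shows "(\<forall>x. F differentiable at x) \<and> (\<forall>v. Dv F v \<in> bcl b)"
  using F
proof induction
  case (base f g)
  have der: "((\<lambda>x. b (f x) (g x)) has_derivative
     (\<lambda>h. b (f x) (frechet_derivative g (at x) h) + b (frechet_derivative f (at x) h) (g x))) (at x)" for x
    by (intro bounded_bilinear.FDERIV[OF bb] frechet_derivative_works[THEN iffD1] sm_diff base)
  show ?case
  proof (intro conjI allI)
    fix x show "(\<lambda>x. b (f x) (g x)) differentiable at x" unfolding differentiable_def by (rule exI, rule der)
  next
    fix v
    have e: "Dv (\<lambda>x. b (f x) (g x)) v = (\<lambda>x. b (f x) (Dv g v x) + b (Dv f v x) (g x))"
      using frechet_at[OF der] by simp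
    have "(\<lambda>x. b (f x) (Dv g v x) + b (Dv f v x) (g x)) \<in> bcl b"
      by (intro bcl.add bcl.base sm_D base)
    then show "Dv (\<lambda>x. b (f x) (g x)) v \<in> bcl b" unfolding e .
  qed
next
  case (add F G)
  show ?case
  proof (intro conjI allI)
    fix x show "(\<lambda>x. F x + G x) differentiable at x"
      using add(3,4) by (intro differentiable_add) auto
  next
    fix v
    have "\<And>x. frechet_derivative (\<lambda>x. F x + G x) (at x) = (\<lambda>v. frechet_derivative F (at x) v + frechet_derivative G (at x) v)"
      apply (rule frechet_at)
      using add(3,4) by (intro has_derivative_add frechet_derivative_works[THEN iffD1]) auto
    then have e: "Dv (\<lambda>x. F x + G x) v = (\<lambda>x. Dv F v x + Dv G v x)" by simp
    have "(\<lambda>x. Dv F v x + Dv G v x) \<in> bcl b" using add(3,4) by (intro bcl.add) auto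
    then show "Dv (\<lambda>x. F x + G x) v \<in> bcl b" unfolding e .
  qed
qed

lemma sm_bilinear:
  assumes bb: "bounded_bilinear b" and fg: "sm f" "sm g"
  shows "sm (\<lambda>x. b (f x) (g x))"
proof (rule sm_class[where C="bcl b"])
  fix F x assume "F \<in> bcl b"
  then have "(\<forall>x. F differentiable at x) \<and> (\<forall>v. Dv F v \<in> bcl b)" by (rule bcl_props[OF bb])
  then show "F differentiable at x" by auto
next
  fix F v assume "F \<in> bcl b"
  then have "(\<forall>x. F differentiable at x) \<and> (\<forall>v. Dv F v \<in> bcl b)" by (rule bcl_props[OF bb])
  then show "Dv F v \<in> bcl b" by auto
next
  show "(\<lambda>x. b (f x) (g x)) \<in> bcl b" by (rule bcl.base[OF fg])
qed

lemma sm_sum: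
  assumes "finite S" "\<And>i. i \<in> S \<Longrightarrow> sm (f i)"
  shows "sm (\<lambda>x. \<Sum>i\<in>S. f i x)"
  using assms
  by (induction S rule: finite_induct) (auto intro: sm_add sm_const)

lemma sm_minus: "sm f \<Longrightarrow> sm (\<lambda>x. - f x)"
proof -
  assume f: "sm f"
  have "bounded_linear (\<lambda>y::'b. - y)" by (rule bounded_linear_minus[OF bounded_linear_ident])
  from sm_lin_comp[OF this f] show ?thesis .
qed

lemma sm_diff2: "sm f \<Longrightarrow> sm g \<Longrightarrow> sm (\<lambda>x. f x - g x)"
proof -
  assume a: "sm f" "sm g"
  have "sm (\<lambda>x. f x + - g x)" by (rule sm_add[OF a(1) sm_minus[OF a(2)]])
  then show ?thesis by simp
qed



definition dotc :: "complex^3 \<Rightarrow> complex^3 \<Rightarrow> complex" where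
  "dotc a b = a$1 * b$1 + a$2 * b$2 + a$3 * b$3"

definition tp :: "complex^3 \<Rightarrow> complex^3 \<Rightarrow> complex^3" where
  "tp N w = w - dotc w N *s N"

lemmas vsimps = vec_eq_iff forall_3 ccross_def dotc_def tp_def

lemma ccross_add: "ccross (a + b) N = ccross a N + ccross b N"
  by (simp add: vsimps algebra_simps)
lemma ccross_diff: "ccross (a - b) N = ccross a N - ccross b N"
  by (simp add: vsimps algebra_simps)
lemma ccross_smult: "ccross (c *s a) N = c *s ccross a N"
  by (simp add: vsimps algebra_simps)
lemma ccross_neg: "ccross (- a) N = - ccross a N"
  by (simp add: vsimps algebra_simps)
lemma dotc_add: "dotc (a + b) N = dotc a N + dotc b N"
  by (simp add: vsimps algebra_simps)
lemma dotc_diff: "dotc (a - b) N = dotc a N - dotc b N"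
  by (simp add: vsimps algebra_simps)
lemma dotc_smult: "dotc (c *s a) N = c * dotc a N"
  by (simp add: vsimps algebra_simps)
lemma ccross_ccross: "ccross (ccross w N) N = dotc w N *s N - dotc N N *s w"
  by (simp add: vsimps algebra_simps)
lemma dotc_ccross: "dotc (ccross a N) N = 0"
  by (simp add: vsimps algebra_simps)
lemma ccross_self: "ccross N N = 0"
  by (simp add: vsimps algebra_simps)
lemma dotc_ccross2: "dotc (ccross N a) N = 0"
  by (simp add: vsimps algebra_simps)
lemma ccross_ccross2: "ccross (ccross N a) N = dotc N N *s a - dotc a N *s N"
  by (simp add: vsimps algebra_simps)
lemma tp_lin: "tp N (a *s u + b *s v) = a *s tp N u + b *s tp N v"
  by (simp add: vsimps algebra_simps)

lemma cscale: "r *\<^sub>R (z::complex) = complex_of_real r * z"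
  by (simp add: scaleR_conv_of_real)

lemma bb_ccross: "bounded_bilinear ccross"
  unfolding bilinear_conv_bounded_bilinear[symmetric] bilinear_def
  by (auto intro!: linearI simp: vsimps algebra_simps cscale)
lemma bb_smult: "bounded_bilinear (\<lambda>(c::complex) (v::complex^3). c *s v)"
  unfolding bilinear_conv_bounded_bilinear[symmetric] bilinear_def
  by (auto intro!: linearI simp: vsimps algebra_simps cscale)
lemma bb_dotc: "bounded_bilinear dotc"
  unfolding bilinear_conv_bounded_bilinear[symmetric] bilinear_def
  by (auto intro!: linearI simp: vsimps algebra_simps cscale)
lemma bl_cvec: "bounded_linear cvec"
  unfolding linear_conv_bounded_linear[symmetric]
  by (auto intro!: linearI simp: vsimps cvec_def algebra_simps cscale)

lemma E1_alg:
  fixes P Q F G r R h :: "nat \<Rightarrow> complex^3" and N :: "complex^3" and s w :: complex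
  assumes NN: "dotc N N = 1"
    and ss: "s * s = \<i>" and w: "w \<noteq> 0"
    and Qdef: "\<And>m. Q m = (1/(\<i>*w)) *s (G m + ccross (of_nat (m+1) *s P (m+1) - s *s P m) N)"
    and Pdef: "\<And>m. P m = r m + (w * dotc (F m) N) *s N"
    and rR: "\<And>m. of_nat (m+1) *s r (m+1) = R m"
    and RR: "\<And>m. (2 * s) *s R m = of_nat (m+1) *s R (m+1) - h m"
    and hdef: "\<And>m. h m = ccross (of_nat (m+1) *s G (m+1) - s *s G m) N - (\<i>*w) *s tp N (F m)"
    and rt: "\<And>m. dotc (r m) N = 0"
  shows "ccross (of_nat (j+1) *s Q (j+1) - s *s Q j) N + (1/w) *s P j = F j"
proof -
  define a :: complex where "a = of_nat (j+1)"
  define b :: complex where "b = of_nat (j+2)"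
  define GG where "GG = a *s G (j+1) - s *s G j"
  define XX where "XX = a *s (b *s P (j+2) - s *s P (j+1)) - s *s (a *s P (j+1) - s *s P j)"
  have tpP: "tp N (P m) = r m" for m
    unfolding tp_def Pdef by (simp add: dotc_add dotc_smult rt NN)
  have s1: "a *s Q (j+1) - s *s Q j = (1/(\<i>*w)) *s (GG + ccross XX N)"
  proof -
    define c where "c = 1/(\<i>*w)"
    have "a *s Q (j+1) - s *s Q j = c *s (a *s G (j+1) + a *s ccross (b *s P (j+2) - s *s P (j+1)) N
            - s *s G j - s *s ccross (a *s P (j+1) - s *s P j) N)"
      unfolding Qdef c_def[symmetric] a_def b_def by (simp add: vsimps algebra_simps)
    also have "\<dots> = c *s (GG + ccross XX N)"
      unfolding GG_def XX_def by (simp add: vsimps algebra_simps)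
    finally show ?thesis unfolding c_def .
  qed
  have s2: "ccross (a *s Q (j+1) - s *s Q j) N = (1/(\<i>*w)) *s (ccross GG N - tp N XX)"
    unfolding s1 ccross_smult ccross_add ccross_ccross NN tp_def by (simp add: algebra_simps)
  have s3: "tp N XX = h j + \<i> *s r j"
  proof -
    have "tp N XX = a *s (b *s r (j+2) - s *s r (j+1)) - s *s (a *s r (j+1) - s *s r j)"
      unfolding XX_def by (simp add: tp_def vsimps tpP[symmetric] algebra_simps)
    also have "\<dots> = a *s (b *s r (j+2)) - a *s (s *s r (j+1)) - s *s (a *s r (j+1)) + s *s (s *s r j)"
      by (simp add: vector_ssub_ldistrib)
    also have "\<dots> = a *s R (j+1) - s *s R j - s *s R j + s *s (s *s r j)"
    proof -
      have e1: "b *s r (j+2) = R (j+1)" using rR[of "j+1"] unfolding b_def by (simp add: add.commute)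
      have e2: "a *s r (j+1) = R j" using rR[of j] unfolding a_def by simp
      have e3: "a *s (s *s r (j+1)) = s *s R j" using e2 by (metis mult.commute vector_smult_assoc)
      show ?thesis by (simp only: e1 e2 e3)
    qed
    also have "\<dots> = a *s R (j+1) - (2 * s) *s R j + (s * s) *s r j"
      by (simp add: vsimps algebra_simps)
    also have "\<dots> = h j + \<i> *s r j" using RR[of j] ss unfolding a_def by (simp add: algebra_simps)
    finally show ?thesis .
  qed
  have s4: "ccross GG N = h j + (\<i>*w) *s tp N (F j)"
    unfolding hdef GG_def a_def by simp
  show ?thesis
    unfolding a_def[symmetric] s2 s3 s4 Pdef using w
    by (simp add: vsimps field_simps)
qed



definition pl :: "nat \<Rightarrow> (nat \<Rightarrow> complex^3) \<Rightarrow> real \<Rightarrow> complex^3" where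
  "pl K c t = (\<Sum>j\<le>K. (t ^ j) *\<^sub>R c j)"

lemma scaleR_smult: "(r::real) *\<^sub>R (v::complex^3) = complex_of_real r *s v"
  unfolding vec_eq_iff vector_scaleR_component vector_smult_component by (simp add: cscale)

lemma pl_deriv:
  "(pl (Suc K) c has_vector_derivative pl K (\<lambda>j. of_nat (Suc j) *\<^sub>R c (Suc j)) t) (at t)"
proof -
  have e: "pl (Suc K) c = (\<lambda>t. c 0 + (\<Sum>j\<le>K. (t ^ Suc j) *\<^sub>R c (Suc j)))"
    unfolding pl_def sum.atMost_Suc_shift by simp
  have dj: "((\<lambda>t. (t ^ Suc j) *\<^sub>R c (Suc j)) has_vector_derivative
        (of_nat (Suc j) * t ^ j) *\<^sub>R c (Suc j)) (at t)" for j
  proof -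
    have "((\<lambda>t. t ^ Suc j) has_real_derivative of_nat (Suc j) * t ^ j) (at t)"
      using DERIV_pow[of "Suc j" t] by simp
    from has_vector_derivative_scaleR[OF this has_vector_derivative_const[of "c (Suc j)"]]
    show ?thesis by simp
  qed
  have "((\<lambda>t. c 0 + (\<Sum>j\<le>K. (t ^ Suc j) *\<^sub>R c (Suc j))) has_vector_derivative
        0 + (\<Sum>j\<le>K. (of_nat (Suc j) * t ^ j) *\<^sub>R c (Suc j))) (at t)"
    by (rule has_vector_derivative_add[OF has_vector_derivative_const has_vector_derivative_sum[OF dj]])
  then show ?thesis unfolding e pl_def by (simp add: mult.commute)
qed

lemma pl_Suc: "c (Suc K) = 0 \<Longrightarrow> pl (Suc K) c = pl K c"
  unfolding pl_def by (simp add: fun_eq_iff)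

lemma pl_0: "pl K c 0 = c 0"
proof -
  have "(\<Sum>j\<le>K. ((0::real) ^ j) *\<^sub>R c j) = (\<Sum>j\<le>K. if j = 0 then c j else 0)"
    by (rule sum.cong) (auto simp: power_0_left)
  then show ?thesis unfolding pl_def by simp
qed

lemma pl_add: "pl K (\<lambda>j. a j + b j) t = pl K a t + pl K b t"
  unfolding pl_def by (simp add: scaleR_right_distrib sum.distrib)
lemma pl_diff: "pl K (\<lambda>j. a j - b j) t = pl K a t - pl K b t"
  unfolding pl_def by (simp add: scaleR_right_diff_distrib sum_subtractf)
lemma pl_smult: "pl K (\<lambda>j. c *s a j) t = c *s pl K a t"
  unfolding pl_def by (simp add: vsimps sum_distrib_left cscale algebra_simps)
lemma pl_ccross: "pl K (\<lambda>j. ccross (a j) N) t = ccross (pl K a t) N"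
  unfolding pl_def by (simp add: vsimps sum_distrib_left sum_subtractf cscale algebra_simps sum.distrib)
lemma pl_cong: "(\<And>j. j \<le> K \<Longrightarrow> a j = b j) \<Longrightarrow> pl K a t = pl K b t"
  unfolding pl_def by simp

lemma sqrt_i_sq: "sqrt_i * sqrt_i = \<i>"
proof -
  have a: "(sqrt 2 / 2) * (sqrt 2 / 2) = (1/2::real)" by (simp add: field_simps)
  have b: "complex_of_real (sqrt 2 / 2) * complex_of_real (sqrt 2 / 2) = 1/2"
    unfolding of_real_mult[symmetric] a by simp
  have c: "(1 + \<i>) * (1 + \<i>) = 2 * \<i>" by (simp add: algebra_simps)
  have "sqrt_i * sqrt_i = (complex_of_real (sqrt 2 / 2) * complex_of_real (sqrt 2 / 2)) * ((1 + \<i>) * (1 + \<i>))"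
    unfolding sqrt_i_def by (simp only: ac_simps)
  also have "\<dots> = \<i>" unfolding b c by simp
  finally show ?thesis .
qed

lemma edecay_deriv:
  "((\<lambda>t. c * edecay t) has_vector_derivative (c * (- sqrt_i) * edecay t)) (at t)"
proof -
  have "((\<lambda>z. c * exp (- sqrt_i * z)) has_field_derivative c * (exp (- sqrt_i * of_real t) * (- sqrt_i))) (at (of_real t))"
    by (auto intro!: derivative_eq_intros)
  from has_vector_derivative_real_field[OF this] show ?thesis
    unfolding edecay_def by (simp add: algebra_simps)
qed

lemma sm_edecay: "sm edecay"
proof -
  let ?C = "{g. \<exists>c. g = (\<lambda>t. c * edecay t)}"
  have "sm (\<lambda>t. 1 * edecay t)"
  proof (rule sm_class[where C="?C"])
    fix f x assume "f \<in> ?C" then obtain c where c: "f = (\<lambda>t. c * edecay t)" by blast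
    show "f differentiable at x" unfolding c using edecay_deriv[of c x]
      unfolding has_vector_derivative_def differentiable_def by blast
  next
    fix f v assume "f \<in> ?C" then obtain c where c: "f = (\<lambda>t. c * edecay t)" by blast
    have "\<And>x. frechet_derivative f (at x) = (\<lambda>h. h *\<^sub>R (c * (- sqrt_i) * edecay x))"
      unfolding c using edecay_deriv[of c] frechet_at unfolding has_vector_derivative_def by blast
    then have "Dv f v = (\<lambda>t. (of_real v * c * (- sqrt_i)) * edecay t)"
      by (simp add: cscale algebra_simps)
    then show "Dv f v \<in> ?C" by blast
  qed (rule CollectI, rule exI, rule refl)
  then show ?thesis by simp
qed

lemma sm_power: "sm (\<lambda>t::real. t ^ j)"
proof (induction j)
  case 0 then show ?case by (simp add: sm_const)
next
  case (Suc j)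
  have "sm (\<lambda>t::real. t * t ^ j)"
    by (rule sm_bilinear[OF bounded_bilinear_mult sm_linear[OF bounded_linear_ident] Suc])
  then show ?case by simp
qed

lemma sm_cc: "sm f \<Longrightarrow> sm g \<Longrightarrow> sm (\<lambda>x. ccross (f x) (g x))"
  by (rule sm_bilinear[OF bb_ccross])
lemma sm_sm:
  fixes f :: "'a::real_normed_vector \<Rightarrow> complex" and g :: "'a \<Rightarrow> complex^3"
  shows "sm f \<Longrightarrow> sm g \<Longrightarrow> sm (\<lambda>x. f x *s g x)"
  by (rule sm_bilinear[OF bb_smult])
lemma sm_dot: "sm f \<Longrightarrow> sm g \<Longrightarrow> sm (\<lambda>x. dotc (f x) (g x))"
  by (rule sm_bilinear[OF bb_dotc])
lemma sm_cmul: "sm f \<Longrightarrow> sm g \<Longrightarrow> sm (\<lambda>x. f x * (g x::complex))"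
  by (rule sm_bilinear[OF bounded_bilinear_mult])
lemma sm_csm: "sm (g::_\<Rightarrow>complex^3) \<Longrightarrow> sm (\<lambda>x. (c::complex) *s g x)"
  by (rule sm_sm[OF sm_const])
lemma sm_cvec: "sm f \<Longrightarrow> sm (\<lambda>x. cvec (f x))"
  by (rule sm_lin_comp[OF bl_cvec])
lemma sm_tp: "sm f \<Longrightarrow> sm g \<Longrightarrow> sm (\<lambda>x. tp (f x) (g x))"
  unfolding tp_def by (intro sm_diff2 sm_sm sm_dot)

lemma sm_U:
  assumes "\<And>j. sm (P j)"
  shows "sm (\<lambda>z::(real^3)\<times>real. edecay (snd z) *s pl K (\<lambda>j. P j (fst z)) (snd z))"
  unfolding pl_def
  apply (intro sm_sm sm_sum)
    apply (rule sm_comp_lin[OF bounded_linear_snd sm_edecay])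
   apply simp
  apply (rule sm_bilinear[OF bounded_bilinear_scaleR])
   apply (rule sm_comp_lin[OF bounded_linear_snd sm_power])
  apply (rule sm_comp_lin[OF bounded_linear_fst assms])
  done


lemma sqrt_i_nz: "sqrt_i \<noteq> 0"
  using sqrt_i_sq by auto

lemma dotc_zero[simp]: "dotc 0 N = 0"
  by (simp add: dotc_def)
lemma ccross_zero[simp]: "ccross 0 N = 0"
  by (simp add: vsimps)
lemma tp_zero[simp]: "tp N 0 = 0"
  by (simp add: tp_def)

lemma dotc_cvec: "dotc (cvec a) (cvec b) = complex_of_real (a \<bullet> b)"
  by (simp add: dotc_def cvec_def inner_vec_def sum_3)

lemma norm_smult: "norm (c *s (v::complex^3)) = norm c * norm v"
  unfolding norm_vec_def vector_smult_component norm_mult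
  by (simp add: L2_set_right_distrib[symmetric])

lemma pl_neg: "pl K (\<lambda>j. - a j) t = - pl K a t"
  unfolding pl_def by (simp add: sum_negf)

fun Rd :: "(nat \<Rightarrow> complex^3) \<Rightarrow> nat \<Rightarrow> nat \<Rightarrow> complex^3" where
  "Rd hh k 0 = 0"
| "Rd hh k (Suc d) = (1 / (2 * sqrt_i)) *s (of_nat (k - d + 1) *s Rd hh k d - hh (k - d))"

definition Rc :: "(nat \<Rightarrow> complex^3) \<Rightarrow> nat \<Rightarrow> nat \<Rightarrow> complex^3" where
  "Rc hh k j = (if j \<le> k then Rd hh k (k + 1 - j) else 0)"

lemma Rc_rec:
  assumes "\<And>m. m > k \<Longrightarrow> hh m = 0"
  shows "(2 * sqrt_i) *s Rc hh k j = of_nat (j+1) *s Rc hh k (j+1) - hh j"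
proof (cases "j \<le> k")
  case True
  have e1: "k + 1 - j = Suc (k - j)" using True by simp
  have e2: "k - (k - j) = j" using True by simp
  have e3: "Rc hh k (j+1) = Rd hh k (k - j)"
    using True by (cases "j = k") (auto simp: Rc_def)
  have "Rc hh k j = (1 / (2 * sqrt_i)) *s (of_nat (j + 1) *s Rd hh k (k - j) - hh j)"
    unfolding Rc_def using True e1 e2 by simp
  then show ?thesis unfolding e3 using sqrt_i_nz by (simp add: vector_smult_assoc)
next
  case False
  then show ?thesis using assms[of j] by (simp add: Rc_def)
qed

lemma Rd_tan:
  assumes "\<And>m. dotc (hh m) N = 0" shows "dotc (Rd hh k d) N = 0"
proof (induction d)
  case 0 then show ?case by simp
next
  case (Suc d)
  show ?case unfolding Rd.simps dotc_smult dotc_diff Suc assms by simp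
qed

lemma Rc_tan: "(\<And>m. dotc (hh m) N = 0) \<Longrightarrow> dotc (Rc hh k j) N = 0"
  unfolding Rc_def using Rd_tan by simp

lemma sm_Rd: "(\<And>m. sm (\<lambda>x. H x m)) \<Longrightarrow> sm (\<lambda>x. Rd (H x) k d)"
proof (induction d)
  case 0 then show ?case by (simp add: sm_const)
next
  case (Suc d)
  show ?case unfolding Rd.simps
    by (intro sm_csm sm_diff2 Suc)
qed

lemma sm_Rc: "(\<And>m. sm (\<lambda>x. H x m)) \<Longrightarrow> sm (\<lambda>x. Rc (H x) k j)"
proof (cases "j \<le> k")
  case True
  assume "\<And>m. sm (\<lambda>x. H x m)"
  then show ?thesis unfolding Rc_def using True sm_Rd[of H k] by simp
next
  case False
  then show ?thesis unfolding Rc_def using sm_const[of 0] by simp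
qed

lemma cexp_deriv:
  "((\<lambda>t. exp (a * complex_of_real t)) has_vector_derivative (a * exp (a * complex_of_real t))) (at t)"
proof -
  have "((\<lambda>z. exp (a * z)) has_field_derivative (exp (a * of_real t) * a)) (at (of_real t))"
    by (auto intro!: derivative_eq_intros)
  from has_vector_derivative_real_field[OF this] show ?thesis by (simp add: mult.commute)
qed

lemma sol_deriv:
  assumes "c (Suc K) = 0"
  shows "((\<lambda>t. edecay t *s pl K c t) has_vector_derivative
           edecay t *s (pl K (\<lambda>j. of_nat (Suc j) *s c (Suc j)) t - sqrt_i *s pl K c t)) (at t)"
proof -
  have pe: "pl K c = pl (Suc K) c" using pl_Suc[of c K, OF assms] by simp
  have d1: "(edecay has_vector_derivative (- sqrt_i * edecay t)) (at t)"
    using cexp_deriv[of "- sqrt_i" t] unfolding edecay_def by simp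
  have d2: "(pl K c has_vector_derivative pl K (\<lambda>j. of_nat (Suc j) *s c (Suc j)) t) (at t)"
    unfolding pe using pl_deriv[of K c t] by (simp add: scaleR_smult)
  from bounded_bilinear.has_vector_derivative[OF bb_smult d1 d2]
  show ?thesis by (simp add: vsimps algebra_simps)
qed

lemma norm_edecay: "norm (edecay t) = exp (- (sqrt 2 / 2) * t)"
  unfolding edecay_def sqrt_i_def by simp

lemma pl_bound:
  assumes "t \<ge> 0"
  shows "norm (pl K c t) \<le> (1 + t) ^ K * (\<Sum>j\<le>K. norm (c j))"
proof -
  have "norm (pl K c t) \<le> (\<Sum>j\<le>K. norm ((t ^ j) *\<^sub>R c j))"
    unfolding pl_def by (rule norm_sum)
  also have "\<dots> \<le> (\<Sum>j\<le>K. (1 + t) ^ K * norm (c j))"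
  proof (rule sum_mono)
    fix j assume "j \<in> {..K}"
    then have "t ^ j \<le> (1 + t) ^ j" "(1 + t) ^ j \<le> (1 + t) ^ K"
      using assms by (auto intro!: power_mono power_increasing)
    then show "norm ((t ^ j) *\<^sub>R c j) \<le> (1 + t) ^ K * norm (c j)"
      using assms by (auto intro!: mult_right_mono)
  qed
  finally show ?thesis by (simp add: sum_distrib_left)
qed

lemma poly_exp_bound:
  assumes "t \<ge> 0"
  shows "(1 + t) ^ m \<le> (2 * real m + 2) ^ m * exp ((1/2) * t)"
proof -
  define d where "d = 1 / (2 * real m + 2)"
  have d: "0 < d" "d \<le> 1" "real m * d \<le> 1/2" unfolding d_def by (auto simp: field_simps)
  have "d * (1 + t) \<le> 1 + d * t" using d by (simp add: algebra_simps)
  also have "\<dots> \<le> exp (d * t)" by (rule exp_ge_add_one_self)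
  finally have "1 + t \<le> exp (d * t) / d" using d by (simp add: field_simps)
  then have "(1 + t) ^ m \<le> (exp (d * t) / d) ^ m" using assms by (intro power_mono) auto
  also have "\<dots> = (1/d) ^ m * exp ((real m * d) * t)"
    by (simp add: power_divide exp_of_nat_mult[symmetric] field_simps)
  also have "\<dots> \<le> (1/d) ^ m * exp ((1/2) * t)"
  proof -
    have "real m * d * t \<le> (1/2) * t" by (rule mult_right_mono[OF d(3) assms])
    then show ?thesis using d by (intro mult_left_mono) auto
  qed
  finally show ?thesis unfolding d_def by simp
qed

lemma decay_L2:
  "(\<integral>\<^sup>+ t\<in>{0..}. ennreal ((norm (edecay t *s pl K c t))\<^sup>2) \<partial>lborel) < \<infinity>"
proof -
  define C where "C = (\<Sum>j\<le>K. norm (c j))"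
  define B where "B = C\<^sup>2 * (2 * real (2*K) + 2) ^ (2*K)"
  have C: "C \<ge> 0" unfolding C_def by (simp add: sum_nonneg)
  have B: "B \<ge> 0" unfolding B_def by simp
  have bnd: "(norm (edecay t *s pl K c t))\<^sup>2 \<le> B * exp (- (1/2) * t)" if t: "t \<ge> 0" for t
  proof -
    have "(norm (edecay t *s pl K c t))\<^sup>2 = exp (- (sqrt 2 / 2) * t) ^ 2 * (norm (pl K c t))\<^sup>2"
      by (simp add: norm_smult norm_edecay power_mult_distrib)
    also have "\<dots> \<le> exp (- (sqrt 2 / 2) * t) ^ 2 * ((1 + t) ^ K * C)\<^sup>2"
      using pl_bound[OF t, of K c] by (intro mult_left_mono power_mono) (auto simp: C_def)
    also have "\<dots> = C\<^sup>2 * (exp (- (sqrt 2) * t) * (1 + t) ^ (2*K))"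
      by (simp add: power_mult_distrib power_mult exp_double[symmetric] algebra_simps flip: exp_of_nat_mult)
    also have "\<dots> \<le> C\<^sup>2 * (exp (- (sqrt 2) * t) * ((2 * real (2*K) + 2) ^ (2*K) * exp ((1/2) * t)))"
      using poly_exp_bound[OF t, of "2*K"] by (intro mult_left_mono) auto
    also have "\<dots> = B * exp (- (sqrt 2 - 1/2) * t)"
      unfolding B_def by (simp add: exp_add[symmetric] algebra_simps)
    also have "\<dots> \<le> B * exp (- (1/2) * t)"
    proof -
      have "sqrt 2 \<ge> 1" by simp
      then have "(1/2) * t \<le> (sqrt 2 - 1/2) * t" using t by (intro mult_right_mono) auto
      then have "- (sqrt 2 - 1/2) * t \<le> - (1/2) * t" by (simp only: mult_minus_left neg_le_iff_le)
      then show ?thesis using B by (intro mult_left_mono) auto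
    qed
    finally show ?thesis .
  qed
  have hi: "((\<lambda>t. B * exp (- (1/2) * t)) has_integral B * (exp (- (1/2) * 0) / (1/2))) {0..}"
    by (intro has_integral_mult_right has_integral_exp_minus_to_infinity) simp
  have "(\<integral>\<^sup>+ t\<in>{0..}. ennreal ((norm (edecay t *s pl K c t))\<^sup>2) \<partial>lborel)
        \<le> (\<integral>\<^sup>+ t. ennreal (B * exp (- (1/2) * t)) * indicator {0..} t \<partial>lborel)"
    apply (rule nn_integral_mono)
    subgoal for t using bnd[of t] by (cases "0 \<le> t") (auto simp: indicator_def intro: ennreal_leI)
    done
  also have "\<dots> = ennreal (B * (exp (- (1/2) * 0) / (1/2)))"
    by (rule nn_integral_has_integral_lebesgue'[OF _ hi]) (use B in auto)
  also have "\<dots> < \<infinity>" by simp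
  finally show ?thesis .
qed


lemma sm_cross_const: "sm f \<Longrightarrow> sm g \<Longrightarrow> sm (\<lambda>x. ccross (f x) (g x))" by (rule sm_cc)

lemma comb_smult: "ccross (e *s X) N + c *s (e *s Y) = e *s (ccross X N + c *s Y)"
  by (simp add: vsimps algebra_simps)
lemma comb_smult2: "- ccross (e *s X) N + c *s (e *s Y) = e *s (- ccross X N + c *s Y)"
  by (simp add: vsimps algebra_simps)

lemma existence:
  fixes \<Gamma> :: "(real^3) set" and n Nx Ph \<phi> :: "real^3 \<Rightarrow> real^3" and \<omega> :: real and k :: nat
    and f g :: "real^3 \<Rightarrow> real \<Rightarrow> complex^3" and Fc Gc :: "nat \<Rightarrow> real^3 \<Rightarrow> complex^3"
  assumes w: "\<omega> > 0"
    and Nx: "sm Nx" "\<And>x. x \<in> \<Gamma> \<Longrightarrow> n x = Nx x" "\<And>x. x \<in> \<Gamma> \<Longrightarrow> norm (n x) = 1"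
    and Fc: "\<And>j. sm (Fc j)" "\<And>j x. j > k \<Longrightarrow> Fc j x = 0"
       "\<And>x \<eta>. x \<in> \<Gamma> \<Longrightarrow> \<eta> \<ge> 0 \<Longrightarrow> f x \<eta> = pl k (\<lambda>j. Fc j x) \<eta>"
    and Gc: "\<And>j. sm (Gc j)" "\<And>j x. j > k \<Longrightarrow> Gc j x = 0"
       "\<And>x \<eta>. x \<in> \<Gamma> \<Longrightarrow> \<eta> \<ge> 0 \<Longrightarrow> g x \<eta> = pl k (\<lambda>j. Gc j x) \<eta>"
    and Ph: "sm Ph" "\<And>x. x \<in> \<Gamma> \<Longrightarrow> \<phi> x = Ph x" "\<And>x. x \<in> \<Gamma> \<Longrightarrow> \<phi> x \<bullet> n x = 0"
  shows "\<exists>p q. poly_class (k+1) \<Gamma> p \<and> poly_class (k+1) \<Gamma> q \<and>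
           is_solution \<Gamma> n \<omega> f g \<phi> (\<lambda>x \<eta>. edecay \<eta> *s p x \<eta>) (\<lambda>x \<eta>. edecay \<eta> *s q x \<eta>)"
proof -
  define Nc where "Nc = (\<lambda>x. cvec (Nx x))"
  define wc where "wc = complex_of_real \<omega>"
  define hh where "hh = (\<lambda>x m. ccross (of_nat (m+1) *s Gc (m+1) x - sqrt_i *s Gc m x) (Nc x)
                                - (\<i> * wc) *s tp (Nc x) (Fc m x))"
  define R where "R = (\<lambda>j x. Rc (hh x) k j)"
  define r where "r = (\<lambda>j x. if j = 0 then ccross (Nc x) (cvec (Ph x)) else (1 / of_nat j) *s R (j - 1) x)"
  define P where "P = (\<lambda>j x. r j x + (wc * dotc (Fc j x) (Nc x)) *s Nc x)"
  define Q where "Q = (\<lambda>j x. (1/(\<i> * wc)) *s (Gc j x + ccross (of_nat (j+1) *s P (j+1) x - sqrt_i *s P j x) (Nc x)))"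
  have wc: "wc \<noteq> 0" using w unfolding wc_def by simp
  have hh_hi: "hh x m = 0" if "m > k" for x m
    unfolding hh_def using that Fc(2) Gc(2) by simp
  have R_hi: "R j x = 0" if "j > k" for j x
    unfolding R_def Rc_def using that by simp
  have P_hi: "P j x = 0" if "j \<ge> k + 2" for j x
    unfolding P_def r_def using that R_hi[of "j - 1"] Fc(2)[of j] by simp
  have Q_hi: "Q j x = 0" if "j \<ge> k + 2" for j x
    unfolding Q_def using that P_hi Gc(2)[of j] by simp
  have sNc: "sm Nc" unfolding Nc_def by (intro sm_cvec Nx(1))
  have shh: "sm (\<lambda>x. hh x m)" for m
    unfolding hh_def by (intro sm_diff2 sm_cc sm_csm Gc(1) sNc sm_tp Fc(1))
  have sR: "sm (R j)" for j
    unfolding R_def by (rule sm_Rc[OF shh])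
  have sr: "sm (r j)" for j
  proof (cases "j = 0")
    case True then show ?thesis unfolding r_def by (simp add: sm_cc sNc sm_cvec Ph(1))
  next
    case False then show ?thesis unfolding r_def by (simp add: sm_csm sR)
  qed
  have sP: "sm (P j)" for j
    unfolding P_def by (intro sm_add sr sm_sm sm_cmul sm_const sm_dot Fc(1) sNc)
  have sQ: "sm (Q j)" for j
    unfolding Q_def by (intro sm_csm sm_add Gc(1) sm_cc sm_diff2 sP sNc)
  define p where "p = (\<lambda>x \<eta>. pl (k+1) (\<lambda>j. P j x) \<eta>)"
  define q where "q = (\<lambda>x \<eta>. pl (k+1) (\<lambda>j. Q j x) \<eta>)"
  have pcp: "poly_class (k+1) \<Gamma> p"
    unfolding poly_class_def
  proof (intro exI[of _ P] conjI allI impI ballI)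
    fix j show "smooth_on_surf \<Gamma> (P j)" unfolding smooth_on_surf_def using sP by blast
  next
    fix x \<eta> show "p x \<eta> = (\<Sum>j\<le>k + 1. \<eta> ^ j *\<^sub>R P j x)" unfolding p_def pl_def ..
  qed
  have pcq: "poly_class (k+1) \<Gamma> q"
    unfolding poly_class_def
  proof (intro exI[of _ Q] conjI allI impI ballI)
    fix j show "smooth_on_surf \<Gamma> (Q j)" unfolding smooth_on_surf_def using sQ by blast
  next
    fix x \<eta> show "q x \<eta> = (\<Sum>j\<le>k + 1. \<eta> ^ j *\<^sub>R Q j x)" unfolding q_def pl_def ..
  qed
  have NN: "dotc (Nc x) (Nc x) = 1" if "x \<in> \<Gamma>" for x
    unfolding Nc_def dotc_cvec using Nx(2,3)[OF that] by (simp add: norm_eq_1)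
  have PhN: "dotc (cvec (Ph x)) (Nc x) = 0" if "x \<in> \<Gamma>" for x
    unfolding Nc_def dotc_cvec using Nx(2)[OF that] Ph(2,3)[OF that] by simp
  have hh_tan: "dotc (hh x m) (Nc x) = 0" if "x \<in> \<Gamma>" for x m
    unfolding hh_def tp_def using NN[OF that]
    by (simp add: dotc_diff dotc_smult dotc_ccross)
  have r_tan: "dotc (r j x) (Nc x) = 0" if "x \<in> \<Gamma>" for x j
    unfolding r_def R_def using Rc_tan[of "hh x" "Nc x", OF hh_tan[OF that]]
    by (simp add: dotc_smult dotc_ccross2)
  have rR: "of_nat (m+1) *s r (m+1) x = R m x" for x m
  proof -
    have "complex_of_nat (Suc m) \<noteq> 0" by (simp only: of_nat_eq_0_iff)
    then have "1 + complex_of_nat m \<noteq> 0" by simp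
    then show ?thesis unfolding r_def by (simp add: vector_smult_assoc)
  qed
  have RR: "(2 * sqrt_i) *s R m x = of_nat (m+1) *s R (m+1) x - hh x m" for x m
    unfolding R_def by (rule Rc_rec) (use hh_hi in auto)
  have E1c: "ccross (of_nat (j+1) *s Q (j+1) x - sqrt_i *s Q j x) (Nc x) + (1/wc) *s P j x = Fc j x"
    if "x \<in> \<Gamma>" for x j
    by (rule E1_alg[where r="\<lambda>j. r j x" and R="\<lambda>j. R j x" and h="hh x" and G="\<lambda>j. Gc j x"])
       (use NN[OF that] sqrt_i_sq wc r_tan[OF that] rR RR in \<open>auto simp: Q_def P_def hh_def\<close>)
  have E2c: "- ccross (of_nat (j+1) *s P (j+1) x - sqrt_i *s P j x) (Nc x) + (\<i> * wc) *s Q j x = Gc j x" for x j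
    unfolding Q_def using wc by (simp add: vector_smult_assoc)
  have du: "((\<lambda>\<eta>. edecay \<eta> *s p x \<eta>) has_vector_derivative
      edecay t *s (pl (k+1) (\<lambda>j. of_nat (Suc j) *s P (Suc j) x) t - sqrt_i *s pl (k+1) (\<lambda>j. P j x) t)) (at t)" for x t
    unfolding p_def by (rule sol_deriv) (simp add: P_hi)
  have dv: "((\<lambda>\<eta>. edecay \<eta> *s q x \<eta>) has_vector_derivative
      edecay t *s (pl (k+1) (\<lambda>j. of_nat (Suc j) *s Q (Suc j) x) t - sqrt_i *s pl (k+1) (\<lambda>j. Q j x) t)) (at t)" for x t
    unfolding q_def by (rule sol_deriv) (simp add: Q_hi)
  have fk: "f x \<eta> = pl (k+1) (\<lambda>j. Fc j x) \<eta>" if "x \<in> \<Gamma>" "\<eta> \<ge> 0" for x \<eta>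
    using Fc(3)[OF that] pl_Suc[of "\<lambda>j. Fc j x" k] Fc(2) by simp
  have gk: "g x \<eta> = pl (k+1) (\<lambda>j. Gc j x) \<eta>" if "x \<in> \<Gamma>" "\<eta> \<ge> 0" for x \<eta>
    using Gc(3)[OF that] pl_Suc[of "\<lambda>j. Gc j x" k] Gc(2) by simp
  have cvn: "cvec (n x) = Nc x" if "x \<in> \<Gamma>" for x
    unfolding Nc_def using Nx(2)[OF that] by simp
  have eqs: "ccross (vector_derivative (\<lambda>\<eta>. edecay \<eta> *s q x \<eta>) (at \<eta>)) (cvec (n x))
              + complex_of_real (1 / \<omega>) *s (edecay \<eta> *s p x \<eta>) = edecay \<eta> *s f x \<eta> \<and>
           - ccross (vector_derivative (\<lambda>\<eta>. edecay \<eta> *s p x \<eta>) (at \<eta>)) (cvec (n x))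
              + (\<i> * complex_of_real \<omega>) *s (edecay \<eta> *s q x \<eta>) = edecay \<eta> *s g x \<eta>"
    if x: "x \<in> \<Gamma>" and eta: "\<eta> > 0" for x \<eta>
  proof
    have "ccross (vector_derivative (\<lambda>\<eta>. edecay \<eta> *s q x \<eta>) (at \<eta>)) (cvec (n x))
              + complex_of_real (1 / \<omega>) *s (edecay \<eta> *s p x \<eta>)
          = edecay \<eta> *s (ccross (pl (k+1) (\<lambda>j. of_nat (Suc j) *s Q (Suc j) x) \<eta> - sqrt_i *s pl (k+1) (\<lambda>j. Q j x) \<eta>) (Nc x)
              + (1/wc) *s pl (k+1) (\<lambda>j. P j x) \<eta>)"
      unfolding vector_derivative_at[OF dv] cvn[OF x] comb_smult[symmetric] p_def wc_def by simp
    also have "\<dots> = edecay \<eta> *s pl (k+1) (\<lambda>j. ccross (of_nat (j+1) *s Q (j+1) x - sqrt_i *s Q j x) (Nc x) + (1/wc) *s P j x) \<eta>"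
      by (simp add: pl_add pl_diff pl_smult pl_ccross)
    also have "\<dots> = edecay \<eta> *s f x \<eta>"
      unfolding E1c[OF x] fk[OF x less_imp_le[OF eta]] ..
    finally show "ccross (vector_derivative (\<lambda>\<eta>. edecay \<eta> *s q x \<eta>) (at \<eta>)) (cvec (n x))
              + complex_of_real (1 / \<omega>) *s (edecay \<eta> *s p x \<eta>) = edecay \<eta> *s f x \<eta>" .
  next
    have "- ccross (vector_derivative (\<lambda>\<eta>. edecay \<eta> *s p x \<eta>) (at \<eta>)) (cvec (n x))
              + (\<i> * complex_of_real \<omega>) *s (edecay \<eta> *s q x \<eta>)
          = edecay \<eta> *s (- ccross (pl (k+1) (\<lambda>j. of_nat (Suc j) *s P (Suc j) x) \<eta> - sqrt_i *s pl (k+1) (\<lambda>j. P j x) \<eta>) (Nc x)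
              + (\<i> * wc) *s pl (k+1) (\<lambda>j. Q j x) \<eta>)"
      unfolding vector_derivative_at[OF du] cvn[OF x] comb_smult2[symmetric] q_def wc_def by simp
    also have "\<dots> = edecay \<eta> *s pl (k+1) (\<lambda>j. - ccross (of_nat (j+1) *s P (j+1) x - sqrt_i *s P j x) (Nc x) + (\<i> * wc) *s Q j x) \<eta>"
      by (simp add: pl_add pl_diff pl_smult pl_ccross pl_neg)
    also have "\<dots> = edecay \<eta> *s g x \<eta>"
      unfolding E2c gk[OF x less_imp_le[OF eta]] ..
    finally show "- ccross (vector_derivative (\<lambda>\<eta>. edecay \<eta> *s p x \<eta>) (at \<eta>)) (cvec (n x))
              + (\<i> * complex_of_real \<omega>) *s (edecay \<eta> *s q x \<eta>) = edecay \<eta> *s g x \<eta>" .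
  qed
  have bc: "ccross (edecay 0 *s p x 0) (cvec (n x)) = cvec (\<phi> x)" if x: "x \<in> \<Gamma>" for x
  proof -
    have "edecay 0 = 1" unfolding edecay_def by simp
    then have "ccross (edecay 0 *s p x 0) (cvec (n x)) = ccross (P 0 x) (Nc x)"
      unfolding p_def pl_0 cvn[OF x] by simp
    also have "\<dots> = cvec (Ph x)"
      unfolding P_def r_def using NN[OF x] PhN[OF x]
      by (simp add: ccross_add ccross_smult ccross_self ccross_ccross2)
    finally show ?thesis using Ph(2)[OF x] by simp
  qed
  have ssh_u: "smooth_surf_halfline \<Gamma> (\<lambda>x \<eta>. edecay \<eta> *s p x \<eta>)"
    unfolding smooth_surf_halfline_def p_def
    by (rule exI[where x="\<lambda>z. edecay (snd z) *s pl (k+1) (\<lambda>j. P j (fst z)) (snd z)"])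
       (simp add: sm_U[OF sP])
  have ssh_v: "smooth_surf_halfline \<Gamma> (\<lambda>x \<eta>. edecay \<eta> *s q x \<eta>)"
    unfolding smooth_surf_halfline_def q_def
    by (rule exI[where x="\<lambda>z. edecay (snd z) *s pl (k+1) (\<lambda>j. Q j (fst z)) (snd z)"])
       (simp add: sm_U[OF sQ])
  have sol: "is_solution \<Gamma> n \<omega> f g \<phi> (\<lambda>x \<eta>. edecay \<eta> *s p x \<eta>) (\<lambda>x \<eta>. edecay \<eta> *s q x \<eta>)"
    unfolding is_solution_def
    apply (intro conjI)
        apply (rule ssh_u)
       apply (rule ssh_v)
      apply (intro ballI allI impI)
      apply (erule (1) eqs)
     apply (intro ballI)
     apply (erule bc)
    apply (intro ballI conjI)
     apply (unfold p_def q_def)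
     apply (rule decay_L2)
    apply (rule decay_L2)
    done
  show ?thesis using pcp pcq sol by blast
qed


lemma bl_tp: "bounded_linear (\<lambda>v. tp N v)"
  unfolding linear_conv_bounded_linear[symmetric]
  by (auto intro!: linearI simp: vsimps algebra_simps cscale)
lemma bl_ccl: "bounded_linear (\<lambda>v. ccross v N)"
  by (rule bounded_bilinear.bounded_linear_left[OF bb_ccross])
lemma bl_sm: "bounded_linear (\<lambda>v. c *s (v::complex^3))"
  by (rule bounded_bilinear.bounded_linear_right[OF bb_smult])

lemma tp_eq: "dotc N N = 1 \<Longrightarrow> tp N v = - ccross (ccross v N) N"
  by (simp add: ccross_ccross tp_def)

lemma dotc_neg: "dotc (- a) N = - dotc a N"
  by (simp add: dotc_def)

lemma norm_sqrt_i: "norm sqrt_i = 1"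
proof -
  have "norm sqrt_i = (sqrt 2 / 2) * cmod (1 + \<i>)" unfolding sqrt_i_def by (simp add: norm_mult)
  also have "cmod (1 + \<i>) = sqrt 2" by (simp add: cmod_def)
  finally show ?thesis by simp
qed

lemma norm_cvec: "norm (cvec v) = norm v"
  unfolding norm_vec_def cvec_def by simp

lemma em_Ioi: "emeasure lborel {0::real<..} = \<infinity>"
proof (rule ccontr)
  assume "emeasure lborel {0::real<..} \<noteq> \<infinity>"
  then obtain m where m: "emeasure lborel {0::real<..} = ennreal m" "m \<ge> 0"
    by (cases "emeasure lborel {0::real<..}") auto
  have "emeasure lborel {1..m+2} \<le> emeasure lborel {0::real<..}" by (rule emeasure_mono) auto
  then have "ennreal (m+1) \<le> ennreal m" using m by simp
  then show False using m by (simp add: ennreal_le_iff)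
qed

lemma const_half:
  fixes F :: "real \<Rightarrow> 'a::banach"
  assumes c: "continuous_on {0..} F" and d: "\<And>\<eta>. \<eta> > 0 \<Longrightarrow> (F has_vector_derivative 0) (at \<eta>)"
    and t: "t \<ge> 0"
  shows "F t = F 0"
proof (cases "t = 0")
  case False
  then have t: "t > 0" using t by simp
  show ?thesis
  proof (rule has_derivative_zero_unique_strong_interval[of "{0,t}" 0 t F "F 0" t])
    show "continuous_on {0..t} F" by (rule continuous_on_subset[OF c]) auto
  next
    fix x assume x: "x \<in> {0..t} - {0, t}"
    then have "x > 0" by auto
    from d[OF this] have "(F has_derivative (\<lambda>h. 0)) (at x)"
      unfolding has_vector_derivative_def by simp
    then show "(F has_derivative (\<lambda>h. 0)) (at x within {0..t})"
      by (rule has_derivative_at_withinI)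
  qed (use t in auto)
qed simp

lemma exp_const:
  fixes A :: "real \<Rightarrow> complex^3"
  assumes cA: "continuous_on {0..} A" and dA: "\<And>\<eta>. \<eta> > 0 \<Longrightarrow> (A has_vector_derivative (a *s A \<eta>)) (at \<eta>)"
    and t: "t \<ge> 0"
  shows "exp (- a * complex_of_real t) *s A t = A 0"
proof -
  define F where "F = (\<lambda>\<eta>. exp (- a * complex_of_real \<eta>) *s A \<eta>)"
  have "F t = F 0"
  proof (rule const_half[OF _ _ t])
    show "continuous_on {0..} F" unfolding F_def
      by (rule bounded_bilinear.continuous_on[OF bb_smult _ cA]) (intro continuous_intros)
  next
    fix \<eta> :: real assume "\<eta> > 0"
    from bounded_bilinear.has_vector_derivative[OF bb_smult cexp_deriv[of "-a" \<eta>] dA[OF this]]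
    show "(F has_vector_derivative 0) (at \<eta>)" unfolding F_def by (simp add: vsimps algebra_simps)
  qed
  then show ?thesis by (simp add: F_def)
qed

lemma sq4: "((p::real) + q + r + s)\<^sup>2 \<le> 4 * (p\<^sup>2 + q\<^sup>2 + r\<^sup>2 + s\<^sup>2)"
proof -
  have "0 \<le> (p-q)\<^sup>2 + (p-r)\<^sup>2 + (p-s)\<^sup>2 + (q-r)\<^sup>2 + (q-s)\<^sup>2 + (r-s)\<^sup>2" by simp
  moreover have "4 * (p\<^sup>2 + q\<^sup>2 + r\<^sup>2 + s\<^sup>2) - (p + q + r + s)\<^sup>2 =
     (p-q)\<^sup>2 + (p-r)\<^sup>2 + (p-s)\<^sup>2 + (q-r)\<^sup>2 + (q-s)\<^sup>2 + (r-s)\<^sup>2"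
    by (simp add: power2_eq_square algebra_simps)
  ultimately show ?thesis by linarith
qed

lemma uniq_core:
  fixes w z wd zd :: "real \<Rightarrow> complex^3" and N :: "complex^3" and \<omega> :: real
  assumes wpos: "\<omega> > 0" and NN: "dotc N N = 1" and nN: "norm N = 1"
    and cw: "continuous_on {0..} w" and cz: "continuous_on {0..} z"
    and dw: "\<And>\<eta>. \<eta> > 0 \<Longrightarrow> (w has_vector_derivative wd \<eta>) (at \<eta>)"
    and dz: "\<And>\<eta>. \<eta> > 0 \<Longrightarrow> (z has_vector_derivative zd \<eta>) (at \<eta>)"
    and e1: "\<And>\<eta>. \<eta> > 0 \<Longrightarrow> ccross (zd \<eta>) N + complex_of_real (1/\<omega>) *s w \<eta> = 0"
    and e2: "\<And>\<eta>. \<eta> > 0 \<Longrightarrow> - ccross (wd \<eta>) N + (\<i> * complex_of_real \<omega>) *s z \<eta> = 0"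
    and b0: "ccross (w 0) N = 0"
    and L2: "\<And>c. c \<ge> 0 \<Longrightarrow> (\<integral>\<^sup>+ \<eta>\<in>{0..}. ennreal ((norm (w \<eta>) + c * norm (z \<eta>))\<^sup>2) \<partial>lborel) < \<infinity>"
    and t: "t \<ge> 0"
  shows "w t = 0 \<and> z t = 0"
proof -
  define s where "s = sqrt_i"
  define wc where "wc = complex_of_real \<omega>"
  have wc: "wc \<noteq> 0" using wpos by (simp add: wc_def)
  have ss: "\<i> = s * s" unfolding s_def by (simp add: sqrt_i_sq)
  have s0: "s \<noteq> 0" unfolding s_def by (rule sqrt_i_nz)
  define y where "y = (\<lambda>\<eta>. ccross (z \<eta>) N)"
  define A where "A = (\<lambda>\<eta>. tp N (w \<eta>) + (s * wc) *s y \<eta>)"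
  define B where "B = (\<lambda>\<eta>. tp N (w \<eta>) - (s * wc) *s y \<eta>)"
  have e1': "ccross (zd \<eta>) N = - (1/wc) *s w \<eta>" if "\<eta> > 0" for \<eta>
    using e1[OF that] unfolding wc_def by (simp add: eq_neg_iff_add_eq_0 vector_smult_lneg)
  have e2': "ccross (wd \<eta>) N = (s * s * wc) *s z \<eta>" if "\<eta> > 0" for \<eta>
    using e2[OF that] unfolding wc_def ss by (simp add: algebra_simps)
  have wN: "dotc (w \<eta>) N = 0" if "\<eta> > 0" for \<eta>
  proof -
    have "dotc (ccross (zd \<eta>) N) N = 0" by (rule dotc_ccross)
    then have "- (1/wc) * dotc (w \<eta>) N = 0" unfolding e1'[OF that] dotc_smult .
    then show ?thesis using wc by simp
  qed
  have Tw: "tp N (w \<eta>) = w \<eta>" if "\<eta> > 0" for \<eta>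
    unfolding tp_def wN[OF that] by simp
  have tpwd: "tp N (wd \<eta>) = - (s * s * wc) *s y \<eta>" if "\<eta> > 0" for \<eta>
    unfolding tp_eq[OF NN] e2'[OF that] y_def ccross_smult by (simp add: vector_smult_lneg)
  have dT: "((\<lambda>\<eta>. tp N (w \<eta>)) has_vector_derivative tp N (wd \<eta>)) (at \<eta>)" if "\<eta> > 0" for \<eta>
    by (rule bounded_linear.has_vector_derivative[OF bl_tp dw[OF that]])
  have dy: "(y has_vector_derivative ccross (zd \<eta>) N) (at \<eta>)" if "\<eta> > 0" for \<eta>
    unfolding y_def by (rule bounded_linear.has_vector_derivative[OF bl_ccl dz[OF that]])
  have dsy: "((\<lambda>\<eta>. (s * wc) *s y \<eta>) has_vector_derivative (s * wc) *s ccross (zd \<eta>) N) (at \<eta>)" if "\<eta> > 0" for \<eta>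
    by (rule bounded_linear.has_vector_derivative[OF bl_sm dy[OF that]])
  have dA: "(A has_vector_derivative ((- s) *s A \<eta>)) (at \<eta>)" if "\<eta> > 0" for \<eta>
  proof -
    have "(A has_vector_derivative (tp N (wd \<eta>) + (s * wc) *s ccross (zd \<eta>) N)) (at \<eta>)"
      unfolding A_def by (rule has_vector_derivative_add[OF dT[OF that] dsy[OF that]])
    moreover have "tp N (wd \<eta>) + (s * wc) *s ccross (zd \<eta>) N = (- s) *s A \<eta>"
      unfolding tpwd[OF that] e1'[OF that] A_def Tw[OF that] using wc
      by (simp add: vec_eq_iff field_simps)
    ultimately show ?thesis by simp
  qed
  have dB: "(B has_vector_derivative (s *s B \<eta>)) (at \<eta>)" if "\<eta> > 0" for \<eta>
  proof -
    have "(B has_vector_derivative (tp N (wd \<eta>) - (s * wc) *s ccross (zd \<eta>) N)) (at \<eta>)"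
      unfolding B_def by (rule has_vector_derivative_diff[OF dT[OF that] dsy[OF that]])
    moreover have "tp N (wd \<eta>) - (s * wc) *s ccross (zd \<eta>) N = s *s B \<eta>"
      unfolding tpwd[OF that] e1'[OF that] B_def Tw[OF that] using wc
      by (simp add: vec_eq_iff field_simps)
    ultimately show ?thesis by simp
  qed
  have cT: "continuous_on {0..} (\<lambda>\<eta>. tp N (w \<eta>))"
    by (rule bounded_linear.continuous_on[OF bl_tp cw])
  have csy: "continuous_on {0..} (\<lambda>\<eta>. (s * wc) *s y \<eta>)"
    unfolding y_def by (rule bounded_linear.continuous_on[OF bl_sm bounded_linear.continuous_on[OF bl_ccl cz]])
  have cA: "continuous_on {0..} A" unfolding A_def by (rule continuous_on_add[OF cT csy])
  have cB: "continuous_on {0..} B" unfolding B_def by (rule continuous_on_diff[OF cT csy])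
  have Aexp: "exp (s * complex_of_real \<eta>) *s A \<eta> = A 0" if "\<eta> \<ge> 0" for \<eta>
    using exp_const[OF cA dA that] by simp
  have Bexp: "edecay \<eta> *s B \<eta> = B 0" if "\<eta> \<ge> 0" for \<eta>
    using exp_const[OF cB dB that] unfolding edecay_def s_def by simp
  obtain K where K: "K > 0" "\<And>a b. norm (ccross a b) \<le> norm a * norm b * K"
    using bounded_bilinear.pos_bounded[OF bb_ccross] by blast
  have Bb: "norm (B \<eta>) \<le> norm (w \<eta>) + (\<omega> * K) * norm (z \<eta>)" if "\<eta> > 0" for \<eta>
  proof -
    have "norm (B \<eta>) \<le> norm (w \<eta>) + norm ((s * wc) *s y \<eta>)"
      unfolding B_def Tw[OF that] by (rule norm_triangle_ineq4)
    also have "norm ((s * wc) *s y \<eta>) = \<omega> * norm (y \<eta>)"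
      unfolding norm_smult s_def wc_def using wpos by (simp add: norm_mult norm_sqrt_i)
    also have "norm (y \<eta>) \<le> norm (z \<eta>) * K" unfolding y_def using K(2)[of "z \<eta>" N] nN by simp
    finally show ?thesis using wpos by (simp add: mult_left_mono algebra_simps)
  qed
  have B0: "B 0 = 0"
  proof (rule ccontr)
    assume nz: "B 0 \<noteq> 0"
    have pt: "(norm (B 0))\<^sup>2 \<le> (norm (w \<eta>) + (\<omega> * K) * norm (z \<eta>))\<^sup>2" if "\<eta> > 0" for \<eta>
    proof -
      have "norm (B 0) = norm (edecay \<eta> *s B \<eta>)"
        using Bexp[of \<eta>] that by simp
      also have "\<dots> = norm (edecay \<eta>) * norm (B \<eta>)" by (rule norm_smult)
      also have "\<dots> \<le> 1 * norm (B \<eta>)"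
        using that by (intro mult_right_mono) (auto simp: norm_edecay)
      also have "\<dots> \<le> norm (w \<eta>) + (\<omega> * K) * norm (z \<eta>)" using Bb[OF that] by simp
      finally show ?thesis by (intro power_mono) auto
    qed
    have ci: "(\<integral>\<^sup>+ (\<eta>::real). ennreal ((norm (B 0))\<^sup>2) * indicator {0<..} \<eta> \<partial>lborel)
        = ennreal ((norm (B 0))\<^sup>2) * emeasure lborel {0::real<..}"
      by (rule nn_integral_cmult_indicator) simp
    have "\<infinity> = (\<integral>\<^sup>+ (\<eta>::real). ennreal ((norm (B 0))\<^sup>2) * indicator {0<..} \<eta> \<partial>lborel)"
      unfolding ci em_Ioi using nz by (simp add: ennreal_mult_top)
    also have "\<dots> \<le> (\<integral>\<^sup>+ \<eta>\<in>{0..}. ennreal ((norm (w \<eta>) + (\<omega> * K) * norm (z \<eta>))\<^sup>2) \<partial>lborel)"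
      apply (rule nn_integral_mono)
      subgoal for \<eta> using pt[of \<eta>] by (cases "\<eta> > 0") (auto simp: indicator_def intro: ennreal_leI)
      done
    also have "\<dots> < \<infinity>" using L2[of "\<omega> * K"] wpos K by simp
    finally show False by simp
  qed
  have T0: "tp N (w 0) = 0" unfolding tp_eq[OF NN] b0 by simp
  have y0: "y 0 = 0" using B0 unfolding B_def T0 using s0 wc by simp
  have A0: "A 0 = 0" unfolding A_def T0 y0 by simp
  have Az: "A \<eta> = 0" if "\<eta> \<ge> 0" for \<eta> using Aexp[OF that] A0 by simp
  have Bz: "B \<eta> = 0" if "\<eta> \<ge> 0" for \<eta> using Bexp[OF that] B0 by (simp add: edecay_def)
  have wz: "w \<eta> = 0" if "\<eta> > 0" for \<eta>
  proof -
    have "A \<eta> + B \<eta> = 2 *s tp N (w \<eta>)" unfolding A_def B_def by (simp add: vsimps)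
    then show ?thesis using Az[of \<eta>] Bz[of \<eta>] that Tw[OF that] by simp
  qed
  have w0: "w 0 = 0"
    by (rule continuous_constant_on_closure[of "{0<..}" w 0 0]) (use cw wz in auto)
  have wdz: "wd \<eta> = 0" if "\<eta> > 0" for \<eta>
  proof -
    have "((\<lambda>_. 0) has_vector_derivative 0) (at \<eta>)" by simp
    then have "(w has_vector_derivative 0) (at \<eta>)"
      by (rule has_vector_derivative_transform_within_open[of _ _ _ "{0<..}"]) (use that wz in auto)
    then show ?thesis using vector_derivative_unique_at[OF dw[OF that]] by simp
  qed
  have zz: "z \<eta> = 0" if "\<eta> > 0" for \<eta>
    using e2[OF that] wdz[OF that] wpos by simp
  have z0: "z 0 = 0"
    by (rule continuous_constant_on_closure[of "{0<..}" z 0 0]) (use cz zz in auto)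
  show ?thesis using t w0 z0 wz zz by (cases "t = 0") auto
qed


lemma ssh_facts:
  fixes u :: "real^3 \<Rightarrow> real \<Rightarrow> complex^3"
  assumes ssh: "smooth_surf_halfline \<Gamma> u" and x: "x \<in> \<Gamma>"
  shows "continuous_on {0..} (u x)"
    and "\<And>\<eta>. \<eta> > 0 \<Longrightarrow> (u x has_vector_derivative vector_derivative (u x) (at \<eta>)) (at \<eta>)"
    and "(\<lambda>\<eta>. ennreal ((norm (u x \<eta>))\<^sup>2) * indicator {0..} \<eta>) \<in> borel_measurable lborel"
proof -
  obtain U :: "(real^3) \<times> real \<Rightarrow> complex^3" where U: "sm U" "\<And>x \<eta>. x \<in> \<Gamma> \<Longrightarrow> \<eta> \<ge> 0 \<Longrightarrow> u x \<eta> = U (x, \<eta>)"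
    using ssh unfolding smooth_surf_halfline_def by blast
  define Ux where "Ux = (\<lambda>\<eta>. U (x, \<eta>))"
  have dUx: "Ux differentiable (at \<eta>)" for \<eta>
  proof -
    have "((\<lambda>\<eta>::real. (x, \<eta>)) has_derivative (\<lambda>h. (0, h))) (at \<eta>)"
      by (auto intro!: derivative_eq_intros)
    then have "(\<lambda>\<eta>::real. (x, \<eta>)) differentiable (at \<eta>)" unfolding differentiable_def by blast
    from differentiable_chain_at[OF this sm_diff[OF U(1)]] show ?thesis
      unfolding Ux_def by (simp add: o_def)
  qed
  have cUx: "continuous_on UNIV Ux"
    by (rule differentiable_imp_continuous_on, rule differentiable_at_imp_differentiable_on) (use dUx in auto)
  have eq: "u x \<eta> = Ux \<eta>" if "\<eta> \<ge> 0" for \<eta> unfolding Ux_def using U(2)[OF x that] .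
  show "continuous_on {0..} (u x)"
    by (rule continuous_on_eq[OF continuous_on_subset[OF cUx]]) (auto simp: eq)
  show "(u x has_vector_derivative vector_derivative (u x) (at \<eta>)) (at \<eta>)" if "\<eta> > 0" for \<eta>
  proof -
    have "(Ux has_vector_derivative vector_derivative Ux (at \<eta>)) (at \<eta>)"
      using dUx vector_derivative_works by blast
    then have d: "(u x has_vector_derivative vector_derivative Ux (at \<eta>)) (at \<eta>)"
      by (rule has_vector_derivative_transform_within_open[of _ _ _ "{0<..}"]) (use that eq in auto)
    then show ?thesis using vector_derivative_at[OF d] by simp
  qed
  have mUx: "Ux \<in> borel_measurable borel" by (rule borel_measurable_continuous_onI[OF cUx])
  have m: "(\<lambda>\<eta>. ennreal ((norm (Ux \<eta>))\<^sup>2) * indicator {0..} \<eta>) \<in> borel_measurable borel"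
    using mUx by measurable
  have "(\<lambda>\<eta>. ennreal ((norm (u x \<eta>))\<^sup>2) * indicator {0..} \<eta>) = (\<lambda>\<eta>. ennreal ((norm (Ux \<eta>))\<^sup>2) * indicator {0..} \<eta>)"
    by (auto simp: fun_eq_iff indicator_def eq)
  then show "(\<lambda>\<eta>. ennreal ((norm (u x \<eta>))\<^sup>2) * indicator {0..} \<eta>) \<in> borel_measurable lborel"
    using m by simp
qed

lemma lin1: "ccross (a - b) N + c *s (p - q) = (ccross a N + c *s p) - (ccross b N + c *s q)"
  by (simp add: vsimps algebra_simps)
lemma lin2: "- ccross (a - b) N + c *s (p - q) = (- ccross a N + c *s p) - (- ccross b N + c *s q)"
  by (simp add: vsimps algebra_simps)

lemma uniqueness:
  fixes \<Gamma> :: "(real^3) set" and n \<phi> :: "real^3 \<Rightarrow> real^3" and \<omega> :: real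
    and f g u v u' v' :: "real^3 \<Rightarrow> real \<Rightarrow> complex^3"
  assumes wpos: "\<omega> > 0" and unit: "norm (n x) = 1"
    and s1: "is_solution \<Gamma> n \<omega> f g \<phi> u v" and s2: "is_solution \<Gamma> n \<omega> f g \<phi> u' v'"
    and x: "x \<in> \<Gamma>" and t: "t \<ge> 0"
  shows "u x t = u' x t \<and> v x t = v' x t"
proof -
  have su: "smooth_surf_halfline \<Gamma> u" and sv: "smooth_surf_halfline \<Gamma> v"
    and eq: "\<And>\<eta>. \<eta> > 0 \<Longrightarrow> ccross (vector_derivative (v x) (at \<eta>)) (cvec (n x)) + complex_of_real (1 / \<omega>) *s u x \<eta>
          = edecay \<eta> *s f x \<eta> \<and>
        - ccross (vector_derivative (u x) (at \<eta>)) (cvec (n x)) + (\<i> * complex_of_real \<omega>) *s v x \<eta>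
          = edecay \<eta> *s g x \<eta>"
    and bc: "ccross (u x 0) (cvec (n x)) = cvec (\<phi> x)"
    and Lu: "(\<integral>\<^sup>+ \<eta>\<in>{0..}. ennreal ((norm (u x \<eta>))\<^sup>2) \<partial>lborel) < \<infinity>"
    and Lv: "(\<integral>\<^sup>+ \<eta>\<in>{0..}. ennreal ((norm (v x \<eta>))\<^sup>2) \<partial>lborel) < \<infinity>"
    using s1 x unfolding is_solution_def by blast+
  have su': "smooth_surf_halfline \<Gamma> u'" and sv': "smooth_surf_halfline \<Gamma> v'"
    and eq': "\<And>\<eta>. \<eta> > 0 \<Longrightarrow> ccross (vector_derivative (v' x) (at \<eta>)) (cvec (n x)) + complex_of_real (1 / \<omega>) *s u' x \<eta>
          = edecay \<eta> *s f x \<eta> \<and>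
        - ccross (vector_derivative (u' x) (at \<eta>)) (cvec (n x)) + (\<i> * complex_of_real \<omega>) *s v' x \<eta>
          = edecay \<eta> *s g x \<eta>"
    and bc': "ccross (u' x 0) (cvec (n x)) = cvec (\<phi> x)"
    and Lu': "(\<integral>\<^sup>+ \<eta>\<in>{0..}. ennreal ((norm (u' x \<eta>))\<^sup>2) \<partial>lborel) < \<infinity>"
    and Lv': "(\<integral>\<^sup>+ \<eta>\<in>{0..}. ennreal ((norm (v' x \<eta>))\<^sup>2) \<partial>lborel) < \<infinity>"
    using s2 x unfolding is_solution_def by blast+
  note fu = ssh_facts[OF su x] and fv = ssh_facts[OF sv x] and fu' = ssh_facts[OF su' x] and fv' = ssh_facts[OF sv' x]
  define N where "N = cvec (n x)"
  have NN: "dotc N N = 1" unfolding N_def dotc_cvec using unit by (simp add: norm_eq_1)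
  have nN: "norm N = 1" unfolding N_def norm_cvec using unit .
  have L2: "(\<integral>\<^sup>+ \<eta>\<in>{0..}. ennreal ((norm (u x \<eta> - u' x \<eta>) + c * norm (v x \<eta> - v' x \<eta>))\<^sup>2) \<partial>lborel) < \<infinity>"
    if c: "c \<ge> 0" for c
  proof -
    define F where "F = (\<lambda>w::real^3 \<Rightarrow> real \<Rightarrow> complex^3. \<lambda>\<eta>. ennreal ((norm (w x \<eta>))\<^sup>2) * indicator {0..} \<eta>)"
    define c4 where "c4 = ennreal (4 * c\<^sup>2)"
    have pt: "ennreal ((norm (u x \<eta> - u' x \<eta>) + c * norm (v x \<eta> - v' x \<eta>))\<^sup>2) * indicator {0..} \<eta>
       \<le> 4 * F u \<eta> + 4 * F u' \<eta> + c4 * F v \<eta> + c4 * F v' \<eta>" for \<eta>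
    proof (cases "\<eta> \<ge> 0")
      case True
      have a: "norm (u x \<eta> - u' x \<eta>) + c * norm (v x \<eta> - v' x \<eta>)
          \<le> norm (u x \<eta>) + norm (u' x \<eta>) + c * norm (v x \<eta>) + c * norm (v' x \<eta>)"
        using norm_triangle_ineq4[of "u x \<eta>" "u' x \<eta>"] norm_triangle_ineq4[of "v x \<eta>" "v' x \<eta>"] c
        by (smt (verit) mult_left_mono distrib_left)
      have "(norm (u x \<eta> - u' x \<eta>) + c * norm (v x \<eta> - v' x \<eta>))\<^sup>2
          \<le> (norm (u x \<eta>) + norm (u' x \<eta>) + c * norm (v x \<eta>) + c * norm (v' x \<eta>))\<^sup>2"
        using a c by (intro power_mono) auto
      also have "\<dots> \<le> 4 * ((norm (u x \<eta>))\<^sup>2 + (norm (u' x \<eta>))\<^sup>2 + (c * norm (v x \<eta>))\<^sup>2 + (c * norm (v' x \<eta>))\<^sup>2)"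
        by (rule sq4)
      also have "\<dots> = 4 * (norm (u x \<eta>))\<^sup>2 + 4 * (norm (u' x \<eta>))\<^sup>2 + (4 * c\<^sup>2) * (norm (v x \<eta>))\<^sup>2 + (4 * c\<^sup>2) * (norm (v' x \<eta>))\<^sup>2"
        by (simp add: power_mult_distrib algebra_simps)
      finally have r: "(norm (u x \<eta> - u' x \<eta>) + c * norm (v x \<eta> - v' x \<eta>))\<^sup>2 \<le> \<dots>" .
      have "ennreal ((norm (u x \<eta> - u' x \<eta>) + c * norm (v x \<eta> - v' x \<eta>))\<^sup>2)
          \<le> ennreal (4 * (norm (u x \<eta>))\<^sup>2 + 4 * (norm (u' x \<eta>))\<^sup>2 + (4 * c\<^sup>2) * (norm (v x \<eta>))\<^sup>2 + (4 * c\<^sup>2) * (norm (v' x \<eta>))\<^sup>2)"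
        by (rule ennreal_leI[OF r])
      also have "\<dots> = 4 * ennreal ((norm (u x \<eta>))\<^sup>2) + 4 * ennreal ((norm (u' x \<eta>))\<^sup>2)
          + c4 * ennreal ((norm (v x \<eta>))\<^sup>2) + c4 * ennreal ((norm (v' x \<eta>))\<^sup>2)"
        unfolding c4_def by (simp add: ennreal_mult')
      finally show ?thesis using True by (simp add: F_def)
    qed (simp add: F_def)
    have mF: "F w \<in> borel_measurable lborel" if "w \<in> {u, u', v, v'}" for w
      using that fu(3) fu'(3) fv(3) fv'(3) unfolding F_def by auto
    have "(\<integral>\<^sup>+ \<eta>\<in>{0..}. ennreal ((norm (u x \<eta> - u' x \<eta>) + c * norm (v x \<eta> - v' x \<eta>))\<^sup>2) \<partial>lborel)
        \<le> (\<integral>\<^sup>+ \<eta>. 4 * F u \<eta> + 4 * F u' \<eta> + c4 * F v \<eta> + c4 * F v' \<eta> \<partial>lborel)"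
      by (rule nn_integral_mono) (rule pt)
    also have "\<dots> = 4 * integral\<^sup>N lborel (F u) + 4 * integral\<^sup>N lborel (F u')
        + c4 * integral\<^sup>N lborel (F v) + c4 * integral\<^sup>N lborel (F v')"
      using mF by (simp add: nn_integral_add nn_integral_cmult)
    also have "\<dots> < \<infinity>"
      using Lu Lu' Lv Lv' unfolding F_def c4_def by (simp add: ennreal_mult_less_top)
    finally show ?thesis .
  qed
  have core: "(\<lambda>\<eta>. u x \<eta> - u' x \<eta>) t = 0 \<and> (\<lambda>\<eta>. v x \<eta> - v' x \<eta>) t = 0"
  proof (rule uniq_core[where N=N and \<omega>=\<omega>
        and wd="\<lambda>\<eta>. vector_derivative (u x) (at \<eta>) - vector_derivative (u' x) (at \<eta>)"
        and zd="\<lambda>\<eta>. vector_derivative (v x) (at \<eta>) - vector_derivative (v' x) (at \<eta>)"])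
    show "continuous_on {0..} (\<lambda>\<eta>. u x \<eta> - u' x \<eta>)" by (rule continuous_on_diff[OF fu(1) fu'(1)])
    show "continuous_on {0..} (\<lambda>\<eta>. v x \<eta> - v' x \<eta>)" by (rule continuous_on_diff[OF fv(1) fv'(1)])
  next
    fix \<eta> :: real assume h: "\<eta> > 0"
    show "((\<lambda>\<eta>. u x \<eta> - u' x \<eta>) has_vector_derivative
          vector_derivative (u x) (at \<eta>) - vector_derivative (u' x) (at \<eta>)) (at \<eta>)"
      by (rule has_vector_derivative_diff[OF fu(2)[OF h] fu'(2)[OF h]])
    show "((\<lambda>\<eta>. v x \<eta> - v' x \<eta>) has_vector_derivative
          vector_derivative (v x) (at \<eta>) - vector_derivative (v' x) (at \<eta>)) (at \<eta>)"
      by (rule has_vector_derivative_diff[OF fv(2)[OF h] fv'(2)[OF h]])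
    show "ccross (vector_derivative (v x) (at \<eta>) - vector_derivative (v' x) (at \<eta>)) N
          + complex_of_real (1/\<omega>) *s (u x \<eta> - u' x \<eta>) = 0"
      unfolding lin1 N_def using eq[OF h] eq'[OF h] by simp
    show "- ccross (vector_derivative (u x) (at \<eta>) - vector_derivative (u' x) (at \<eta>)) N
          + (\<i> * complex_of_real \<omega>) *s (v x \<eta> - v' x \<eta>) = 0"
      unfolding lin2 N_def using eq[OF h] eq'[OF h] by simp
  next
    show "ccross (u x 0 - u' x 0) N = 0" unfolding ccross_diff N_def bc bc' by simp
  next
    fix c :: real assume "c \<ge> 0" then show "(\<integral>\<^sup>+ \<eta>\<in>{0..}. ennreal ((norm (u x \<eta> - u' x \<eta>) + c * norm (v x \<eta> - v' x \<eta>))\<^sup>2) \<partial>lborel) < \<infinity>"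
      by (rule L2)
  qed (use wpos NN nN t in auto)
  then show ?thesis by simp
qed


lemma extend_coeffs:
  fixes a :: "nat \<Rightarrow> real^3 \<Rightarrow> complex^3"
  assumes "\<forall>j\<le>k. smooth_on_surf \<Gamma> (a j)"
  shows "\<exists>Fc. (\<forall>j. sm (Fc j)) \<and> (\<forall>j x. j > k \<longrightarrow> Fc j x = 0) \<and> (\<forall>j\<le>k. \<forall>x\<in>\<Gamma>. a j x = Fc j x)"
proof -
  have "\<forall>j. \<exists>A. j \<le> k \<longrightarrow> sm A \<and> (\<forall>x\<in>\<Gamma>. a j x = A x)"
    using assms unfolding smooth_on_surf_def by blast
  then obtain A where A: "\<And>j. j \<le> k \<Longrightarrow> sm (A j) \<and> (\<forall>x\<in>\<Gamma>. a j x = A j x)"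
    by metis
  define Fc where "Fc = (\<lambda>j x. if j \<le> k then A j x else 0)"
  have "sm (Fc j)" for j
  proof (cases "j \<le> k")
    case True
    then have "Fc j = A j" unfolding Fc_def by auto
    then show ?thesis using A[OF True] by simp
  next
    case False
    then have "Fc j = (\<lambda>x. 0)" unfolding Fc_def by auto
    then show ?thesis by (simp add: sm_const)
  qed
  moreover have "\<forall>j x. j > k \<longrightarrow> Fc j x = 0" unfolding Fc_def by auto
  moreover have "\<forall>j\<le>k. \<forall>x\<in>\<Gamma>. a j x = Fc j x" unfolding Fc_def using A by auto
  ultimately show ?thesis by blast
qed

lemma poly_ext:
  assumes "poly_class k \<Gamma> f"
  shows "\<exists>Fc. (\<forall>j. sm (Fc j)) \<and> (\<forall>j x. j > k \<longrightarrow> Fc j x = 0) \<and>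
     (\<forall>x\<in>\<Gamma>. \<forall>\<eta>\<ge>0. f x \<eta> = pl k (\<lambda>j. Fc j x) \<eta>)"
proof -
  obtain a where a: "\<forall>j\<le>k. smooth_on_surf \<Gamma> (a j)"
      "\<forall>x\<in>\<Gamma>. \<forall>\<eta>\<ge>0. f x \<eta> = (\<Sum>j\<le>k. (\<eta> ^ j) *\<^sub>R a j x)"
    using assms unfolding poly_class_def by blast
  obtain Fc where F: "\<forall>j. sm (Fc j)" "\<forall>j x. j > k \<longrightarrow> Fc j x = 0" "\<forall>j\<le>k. \<forall>x\<in>\<Gamma>. a j x = Fc j x"
    using extend_coeffs[OF a(1)] by blast
  have "\<forall>x\<in>\<Gamma>. \<forall>\<eta>\<ge>0. f x \<eta> = pl k (\<lambda>j. Fc j x) \<eta>"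
    using a(2) F(3) unfolding pl_def by auto
  then show ?thesis using F(1,2) by blast
qed

theorem lemma4p1:
  fixes \<Gamma> :: "(real^3) set" and n :: "real^3 \<Rightarrow> real^3" and \<omega> :: real and k :: nat
    and f g :: "real^3 \<Rightarrow> real \<Rightarrow> complex^3" and \<phi> :: "real^3 \<Rightarrow> real^3"
  assumes "smooth_closed_surface \<Gamma>" and "unit_normal_field \<Gamma> n" and "\<omega> > 0"
    and "poly_class k \<Gamma> f" and "poly_class k \<Gamma> g"
    and "smooth_on_surf \<Gamma> \<phi>" and "\<forall>x\<in>\<Gamma>. \<phi> x \<bullet> n x = 0"
  shows "(\<exists>u v. is_solution \<Gamma> n \<omega> f g \<phi> u v) \<and>
         (\<forall>u v u' v'. is_solution \<Gamma> n \<omega> f g \<phi> u v \<longrightarrow> is_solution \<Gamma> n \<omega> f g \<phi> u' v' \<longrightarrow>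
             (\<forall>x\<in>\<Gamma>. \<forall>\<eta>\<ge>0. u x \<eta> = u' x \<eta> \<and> v x \<eta> = v' x \<eta>)) \<and>
         (\<forall>u v. is_solution \<Gamma> n \<omega> f g \<phi> u v \<longrightarrow>
             (\<exists>p q. poly_class (k + 1) \<Gamma> p \<and> poly_class (k + 1) \<Gamma> q \<and>
                (\<forall>x\<in>\<Gamma>. \<forall>\<eta>\<ge>0. u x \<eta> = edecay \<eta> *s p x \<eta> \<and> v x \<eta> = edecay \<eta> *s q x \<eta>)))"
proof -
  have wpos: "\<omega> > 0" by fact
  obtain Nx where Nx: "sm Nx" "\<forall>x\<in>\<Gamma>. n x = Nx x"
    using assms(2) unfolding unit_normal_field_def smooth_on_surf_def by blast
  have unit: "\<forall>x\<in>\<Gamma>. norm (n x) = 1"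
    using assms(2) unfolding unit_normal_field_def by blast
  obtain Ph where Ph: "sm Ph" "\<forall>x\<in>\<Gamma>. \<phi> x = Ph x"
    using assms(6) unfolding smooth_on_surf_def by blast
  obtain Fc where F: "\<forall>j. sm (Fc j)" "\<forall>j x. j > k \<longrightarrow> Fc j x = 0"
      "\<forall>x\<in>\<Gamma>. \<forall>\<eta>\<ge>0. f x \<eta> = pl k (\<lambda>j. Fc j x) \<eta>"
    using poly_ext[OF assms(4)] by blast
  obtain Gc where G: "\<forall>j. sm (Gc j)" "\<forall>j x. j > k \<longrightarrow> Gc j x = 0"
      "\<forall>x\<in>\<Gamma>. \<forall>\<eta>\<ge>0. g x \<eta> = pl k (\<lambda>j. Gc j x) \<eta>"
    using poly_ext[OF assms(5)] by blast
  obtain p q where pq: "poly_class (k+1) \<Gamma> p" "poly_class (k+1) \<Gamma> q"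
      "is_solution \<Gamma> n \<omega> f g \<phi> (\<lambda>x \<eta>. edecay \<eta> *s p x \<eta>) (\<lambda>x \<eta>. edecay \<eta> *s q x \<eta>)"
  proof -
    have "\<exists>p q. poly_class (k+1) \<Gamma> p \<and> poly_class (k+1) \<Gamma> q \<and>
           is_solution \<Gamma> n \<omega> f g \<phi> (\<lambda>x \<eta>. edecay \<eta> *s p x \<eta>) (\<lambda>x \<eta>. edecay \<eta> *s q x \<eta>)"
      by (rule existence[where Nx=Nx and Fc=Fc and Gc=Gc and Ph=Ph])
         (use wpos Nx unit F G Ph assms(7) in auto)
    then show ?thesis using that by blast
  qed
  have uniq: "\<forall>u v u' v'. is_solution \<Gamma> n \<omega> f g \<phi> u v \<longrightarrow> is_solution \<Gamma> n \<omega> f g \<phi> u' v' \<longrightarrow>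
             (\<forall>x\<in>\<Gamma>. \<forall>\<eta>\<ge>0. u x \<eta> = u' x \<eta> \<and> v x \<eta> = v' x \<eta>)"
  proof (intro allI impI ballI)
    fix u v u' v' :: "real^3 \<Rightarrow> real \<Rightarrow> complex^3" and x :: "real^3" and \<eta> :: real
    assume s: "is_solution \<Gamma> n \<omega> f g \<phi> u v" "is_solution \<Gamma> n \<omega> f g \<phi> u' v'"
      and x: "x \<in> \<Gamma>" and t: "0 \<le> \<eta>"
    show "u x \<eta> = u' x \<eta> \<and> v x \<eta> = v' x \<eta>"
      by (rule uniqueness[OF wpos _ s(1) s(2) x t]) (use unit x in blast)
  qed
  show ?thesis
  proof (intro conjI)
    show "\<exists>u v. is_solution \<Gamma> n \<omega> f g \<phi> u v" using pq(3) by blast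
    show "\<forall>u v u' v'. is_solution \<Gamma> n \<omega> f g \<phi> u v \<longrightarrow> is_solution \<Gamma> n \<omega> f g \<phi> u' v' \<longrightarrow>
             (\<forall>x\<in>\<Gamma>. \<forall>\<eta>\<ge>0. u x \<eta> = u' x \<eta> \<and> v x \<eta> = v' x \<eta>)" by (rule uniq)
    show "\<forall>u v. is_solution \<Gamma> n \<omega> f g \<phi> u v \<longrightarrow>
             (\<exists>p q. poly_class (k + 1) \<Gamma> p \<and> poly_class (k + 1) \<Gamma> q \<and>
                (\<forall>x\<in>\<Gamma>. \<forall>\<eta>\<ge>0. u x \<eta> = edecay \<eta> *s p x \<eta> \<and> v x \<eta> = edecay \<eta> *s q x \<eta>))"
    proof (intro allI impI)
      fix u v assume s: "is_solution \<Gamma> n \<omega> f g \<phi> u v"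
      have "\<forall>x\<in>\<Gamma>. \<forall>\<eta>\<ge>0. u x \<eta> = edecay \<eta> *s p x \<eta> \<and> v x \<eta> = edecay \<eta> *s q x \<eta>"
        using uniq s pq(3) by blast
      then show "\<exists>p q. poly_class (k + 1) \<Gamma> p \<and> poly_class (k + 1) \<Gamma> q \<and>
                (\<forall>x\<in>\<Gamma>. \<forall>\<eta>\<ge>0. u x \<eta> = edecay \<eta> *s p x \<eta> \<and> v x \<eta> = edecay \<eta> *s q x \<eta>)"
        using pq(1,2) by blast
    qed
  qed
qed

end
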